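(* Let $(J,D)\in\mathcal{N}(n)$ be a threshold-linear network with $-D+J=-\mathbf{1}$, the $n\times n$ matrix with all entries $-1$. Then every subset $\sigma\subset\{1,\dots,n\}$ with $|\sigma|\ge2$ is a flexible clique of $(J,D)$; in particular $\mathrm{flex}(J,D)=2^n-n-1$.
   Context: A threshold-linear network $(J,D)$ on $n$ neurons: $J$ real $n\times n$, $D=\operatorname{diag}(\tau_1^{-1},\dots,\tau_n^{-1})$ with $\tau_i>0$, $-D+J$ with strictly negative diagonal, dynamics $\dot x=-Dx+[Jx+b]_+$ ($x\in\mathbb{R}^n_{\ge0}$, $b\in\mathbb{R}^n$ constant, $[y]_+=\max(y,0)$ coordinatewise); $\mathcal{N}(n)$ is the set of all such networks (no connectivity constraint, so every subset of $\{1,\dots,n\}$ is a clique). A non-empty $\sigma$ is a stable set if for some $b$ there is an asymptotically stable fixed point $x^*$ with $\{i:x^*_i>0\}=\sigma$; a marginal set if it is not stable but for some $b$ there is a stable fixed point with support $\sigma$; an unstable set otherwise. An $\varepsilon$-perturbation is a real $n\times n$ matrix $A$ with all $|A_{ij}|\le\varepsilon$. A maximally stable clique is a stable set not properly contained in another stable set; a minimally unstable clique is an unstable set not properly containing another unstable set. $\sigma$ is a flexible clique of $(J,D)$ if for every $\varepsilon>0$ there exist $\varepsilon$-perturbations $A_s,A_u$ such that $\sigma$ is a maximally stable clique of $(J+A_s,D)$ and a minimally unstable clique of $(J+A_u,D)$. $\mathrm{flex}(J,D)$ is the number of flexible cliques. *)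

theory Defs
  imports "HOL-Analysis.Analysis"
begin

text \<open>Threshold-linear networks on n neurons, n = CARD('n). Vectors are real^'n,
  matrices real^'n^'n. D is the diagonal matrix diag(1/tau_i).\<close>

definition tln_network :: "real^'n::finite^'n \<Rightarrow> real^'n^'n \<Rightarrow> bool" where
  "tln_network J D \<longleftrightarrow> (\<forall>i j. i \<noteq> j \<longrightarrow> D $ i $ j = 0) \<and> (\<forall>i. D $ i $ i > 0)
     \<and> (\<forall>i. (- D + J) $ i $ i < 0)"

definition relu_vec :: "real^'n::finite \<Rightarrow> real^'n" where
  "relu_vec y = (\<chi> i. max (y $ i) 0)"

definition tln_field :: "real^'n::finite^'n \<Rightarrow> real^'n^'n \<Rightarrow> real^'n \<Rightarrow> real^'n \<Rightarrow> real^'n" where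
  "tln_field J D b x = - (D *v x) + relu_vec (J *v x + b)"

definition nonneg_vec :: "real^'n::finite \<Rightarrow> bool" where
  "nonneg_vec x \<longleftrightarrow> (\<forall>i. 0 \<le> x $ i)"

definition supp_vec :: "real^'n::finite \<Rightarrow> 'n set" where
  "supp_vec x = {i. 0 < x $ i}"

definition tln_solution :: "real^'n::finite^'n \<Rightarrow> real^'n^'n \<Rightarrow> real^'n \<Rightarrow> real^'n \<Rightarrow> (real \<Rightarrow> real^'n) \<Rightarrow> bool" where
  "tln_solution J D b x0 x \<longleftrightarrow> x 0 = x0 \<and>
     (\<forall>t\<ge>0. (x has_vector_derivative tln_field J D b (x t)) (at t within {0..}))"

definition tln_fixed_point :: "real^'n::finite^'n \<Rightarrow> real^'n^'n \<Rightarrow> real^'n \<Rightarrow> real^'n \<Rightarrow> bool" where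
  "tln_fixed_point J D b xs \<longleftrightarrow> nonneg_vec xs \<and> tln_field J D b xs = 0"

definition tln_stable_fp :: "real^'n::finite^'n \<Rightarrow> real^'n^'n \<Rightarrow> real^'n \<Rightarrow> real^'n \<Rightarrow> bool" where
  "tln_stable_fp J D b xs \<longleftrightarrow> tln_fixed_point J D b xs \<and>
     (\<forall>e>0. \<exists>d>0. \<forall>x0 x. nonneg_vec x0 \<and> dist x0 xs < d \<and> tln_solution J D b x0 x
        \<longrightarrow> (\<forall>t\<ge>0. dist (x t) xs < e))"

definition tln_asymp_stable_fp :: "real^'n::finite^'n \<Rightarrow> real^'n^'n \<Rightarrow> real^'n \<Rightarrow> real^'n \<Rightarrow> bool" where
  "tln_asymp_stable_fp J D b xs \<longleftrightarrow> tln_stable_fp J D b xs \<and>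
     (\<exists>d>0. \<forall>x0 x. nonneg_vec x0 \<and> dist x0 xs < d \<and> tln_solution J D b x0 x
        \<longrightarrow> (x \<longlongrightarrow> xs) at_top)"

definition stable_set :: "real^'n::finite^'n \<Rightarrow> real^'n^'n \<Rightarrow> 'n set \<Rightarrow> bool" where
  "stable_set J D \<sigma> \<longleftrightarrow> \<sigma> \<noteq> {} \<and> (\<exists>b xs. tln_asymp_stable_fp J D b xs \<and> supp_vec xs = \<sigma>)"

definition marginal_set :: "real^'n::finite^'n \<Rightarrow> real^'n^'n \<Rightarrow> 'n set \<Rightarrow> bool" where
  "marginal_set J D \<sigma> \<longleftrightarrow> \<sigma> \<noteq> {} \<and> \<not> stable_set J D \<sigma> \<and>
     (\<exists>b xs. tln_stable_fp J D b xs \<and> supp_vec xs = \<sigma>)"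

definition unstable_set :: "real^'n::finite^'n \<Rightarrow> real^'n^'n \<Rightarrow> 'n set \<Rightarrow> bool" where
  "unstable_set J D \<sigma> \<longleftrightarrow> \<sigma> \<noteq> {} \<and> \<not> stable_set J D \<sigma> \<and> \<not> marginal_set J D \<sigma>"

definition maximally_stable_clique :: "real^'n::finite^'n \<Rightarrow> real^'n^'n \<Rightarrow> 'n set \<Rightarrow> bool" where
  "maximally_stable_clique J D \<sigma> \<longleftrightarrow> stable_set J D \<sigma> \<and>
     \<not> (\<exists>\<tau>. \<sigma> \<subset> \<tau> \<and> stable_set J D \<tau>)"

definition minimally_unstable_clique :: "real^'n::finite^'n \<Rightarrow> real^'n^'n \<Rightarrow> 'n set \<Rightarrow> bool" where
  "minimally_unstable_clique J D \<sigma> \<longleftrightarrow> unstable_set J D \<sigma> \<and>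
     \<not> (\<exists>\<tau>. \<tau> \<subset> \<sigma> \<and> unstable_set J D \<tau>)"

definition eps_perturbation :: "real \<Rightarrow> real^'n::finite^'n \<Rightarrow> bool" where
  "eps_perturbation e A \<longleftrightarrow> (\<forall>i j. \<bar>A $ i $ j\<bar> \<le> e)"

definition flexible_clique :: "real^'n::finite^'n \<Rightarrow> real^'n^'n \<Rightarrow> 'n set \<Rightarrow> bool" where
  "flexible_clique J D \<sigma> \<longleftrightarrow> (\<forall>e>0. \<exists>As Au. eps_perturbation e As \<and> eps_perturbation e Au \<and>
     maximally_stable_clique (J + As) D \<sigma> \<and> minimally_unstable_clique (J + Au) D \<sigma>)"

definition flex :: "real^'n::finite^'n \<Rightarrow> real^'n^'n \<Rightarrow> nat" where
  "flex J D = card {\<sigma>. flexible_clique J D \<sigma>}"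

end

theory Submission
  imports Defs
begin

fun picard :: "('a::euclidean_space \<Rightarrow> 'a) \<Rightarrow> 'a \<Rightarrow> nat \<Rightarrow> real \<Rightarrow> 'a" where
  "picard f x0 0 = (\<lambda>t. x0)"
| "picard f x0 (Suc m) = (\<lambda>t. x0 + integral {0..t} (\<lambda>s. f (picard f x0 m s)))"

lemma integral_power_real:
  assumes "0 \<le> t"
  shows "integral {0..t} (\<lambda>s::real. s ^ k) = t ^ Suc k / Suc k"
proof -
  have "((\<lambda>s::real. s ^ k) has_integral (t ^ Suc k / Suc k - 0 ^ Suc k / Suc k)) {0..t}"
    apply (rule fundamental_theorem_of_calculus[OF assms])
    unfolding has_real_derivative_iff_has_vector_derivative[symmetric]
    apply (auto intro!: derivative_eq_intros)
    subgoal for x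
      by (cases k) (auto simp: field_simps)
    done
  then show ?thesis by (simp add: integral_unique)
qed

lemma lip_cont:
  assumes "\<forall>x y. norm (f x - f y) \<le> L * norm (x - y)"
  shows "continuous_on UNIV f"
proof -
  have "(max L 0)-lipschitz_on UNIV f"
    apply (rule lipschitz_onI)
    using assms apply (auto simp: dist_norm)
    by (smt (verit, del_insts) mult_right_mono norm_ge_zero)
  then show ?thesis using lipschitz_on_continuous_on by blast
qed

context
  fixes f :: "'a::euclidean_space \<Rightarrow> 'a" and L :: real and x0 :: 'a
  assumes lip: "\<forall>x y. norm (f x - f y) \<le> L * norm (x - y)" and L0: "0 \<le> L"
begin

lemma fcont: "continuous_on S f"
  using lip_cont[OF lip] continuous_on_subset by blast

lemma picard_cont: "continuous_on {0..T} (picard f x0 m)"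
proof (induction m)
  case 0
  then show ?case by simp
next
  case (Suc m)
  have c: "continuous_on {0..T} (\<lambda>s. f (picard f x0 m s))"
    by (rule continuous_on_compose2[OF fcont Suc]) auto
  show ?case
    apply simp
    apply (rule continuous_on_add[OF continuous_on_const])
    apply (rule indefinite_integral_continuous_1)
    using c integrable_continuous_real by blast
qed

lemma picard_int: "(\<lambda>s. f (picard f x0 m s)) integrable_on {0..t}"
  apply (rule integrable_continuous_real)
  by (rule continuous_on_compose2[OF fcont picard_cont]) auto

lemma picard_bound:
  assumes "0 \<le> t"
  shows "norm (picard f x0 (Suc m) t - picard f x0 m t) \<le> norm (f x0) * L^m * t^Suc m / fact (Suc m)"
  using assms
proof (induction m arbitrary: t)
  case 0
  then show ?case by simp
next
  case (Suc m)
  let ?B = "norm (f x0)"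
  have "picard f x0 (Suc (Suc m)) t - picard f x0 (Suc m) t
      = integral {0..t} (\<lambda>s. f (picard f x0 (Suc m) s) - f (picard f x0 m s))"
    unfolding integral_diff[OF picard_int picard_int]
    by (subst (1 2) picard.simps(2)) simp
  also have "norm \<dots> \<le> integral {0..t} (\<lambda>s. (L * (?B * L^m / fact (Suc m))) * s ^ Suc m)"
  proof (rule integral_norm_bound_integral)
    show "(\<lambda>s. f (picard f x0 (Suc m) s) - f (picard f x0 m s)) integrable_on {0..t}"
      by (rule integrable_diff[OF picard_int picard_int])
    show "(\<lambda>s. L * (?B * L ^ m / fact (Suc m)) * s ^ Suc m) integrable_on {0..t}"
      by (intro integrable_continuous_real continuous_intros)
    fix s assume s: "s \<in> {0..t}"
    have "norm (f (picard f x0 (Suc m) s) - f (picard f x0 m s)) \<le> L * norm (picard f x0 (Suc m) s - picard f x0 m s)"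
      using lip by blast
    also have "\<dots> \<le> L * (?B * L^m * s^Suc m / fact (Suc m))"
      by (rule mult_left_mono[OF Suc.IH L0]) (use s in simp)
    finally show "norm (f (picard f x0 (Suc m) s) - f (picard f x0 m s)) \<le> L * (?B * L ^ m / fact (Suc m)) * s ^ Suc m"
      by (simp add: field_simps)
  qed
  also have "\<dots> = (L * (?B * L^m / fact (Suc m))) * (t ^ Suc (Suc m) / Suc (Suc m))"
    using integral_power_real[OF Suc.prems, of "Suc m"] by simp
  also have "\<dots> = ?B * L ^ Suc m * t ^ Suc (Suc m) / fact (Suc (Suc m))"
    by (simp add: field_simps fact_Suc[of "Suc m"])
  finally show ?case .
qed

definition "Xsol t = x0 + (\<Sum>j. picard f x0 (Suc j) t - picard f x0 j t)"

lemma picard_unif: "uniform_limit {0..T} (picard f x0) Xsol sequentially"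
proof -
  let ?B = "norm (f x0)"
  define M where "M j = ?B * T * (inverse (fact j) * (L*T)^j)" for j
  have sM: "summable M"
    unfolding M_def by (intro summable_mult summable_exp)
  have bnd: "norm (picard f x0 (Suc j) t - picard f x0 j t) \<le> M j" if t: "t \<in> {0..T}" for j t
  proof -
    have "norm (picard f x0 (Suc j) t - picard f x0 j t) \<le> ?B * L^j * t^Suc j / fact (Suc j)"
      using picard_bound t by auto
    also have "\<dots> \<le> ?B * L^j * T^Suc j / fact j"
    proof (rule frac_le)
      show "0 \<le> ?B * L^j * T^Suc j" using t L0 by auto
      show "?B * L^j * t^Suc j \<le> ?B * L^j * T^Suc j"
        using t L0 by (intro mult_left_mono power_mono) auto
    qed (auto simp: fact_mono)
    also have "\<dots> = M j" unfolding M_def by (simp add: field_simps power_mult_distrib)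
    finally show ?thesis .
  qed
  have u: "uniform_limit {0..T} (\<lambda>n t. \<Sum>i<n. picard f x0 (Suc i) t - picard f x0 i t)
      (\<lambda>t. \<Sum>i. picard f x0 (Suc i) t - picard f x0 i t) sequentially"
    by (rule Weierstrass_m_test[OF bnd sM])
  have "uniform_limit {0..T} (\<lambda>n t. x0 + (\<Sum>i<n. picard f x0 (Suc i) t - picard f x0 i t)) Xsol sequentially"
    unfolding Xsol_def by (intro uniform_limit_add[OF uniform_limit_const u])
  moreover have "(\<lambda>n t. x0 + (\<Sum>i<n. picard f x0 (Suc i) t - picard f x0 i t)) = picard f x0"
    by (intro ext, subst sum_lessThan_telescope) simp
  ultimately show ?thesis by simp
qed

lemma Xsol_cont: "continuous_on {0..T} Xsol"
  by (rule uniform_limit_theorem[OF _ picard_unif]) (auto intro: always_eventually picard_cont)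

lemma fX_unif: "uniform_limit {0..T} (\<lambda>n s. f (picard f x0 n s)) (\<lambda>s. f (Xsol s)) sequentially"
proof (rule uniform_limitI)
  fix e :: real assume e: "e > 0"
  have "\<forall>\<^sub>F n in sequentially. \<forall>x\<in>{0..T}. dist (picard f x0 n x) (Xsol x) < e / (L + 1)"
    using uniform_limitD[OF picard_unif] e L0 by simp
  then show "\<forall>\<^sub>F n in sequentially. \<forall>x\<in>{0..T}. dist (f (picard f x0 n x)) (f (Xsol x)) < e"
  proof (rule eventually_mono)
    fix n assume h: "\<forall>x\<in>{0..T}. dist (picard f x0 n x) (Xsol x) < e / (L + 1)"
    show "\<forall>x\<in>{0..T}. dist (f (picard f x0 n x)) (f (Xsol x)) < e"
    proof
      fix x assume x: "x \<in> {0..T}"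
      have "dist (f (picard f x0 n x)) (f (Xsol x)) \<le> L * dist (picard f x0 n x) (Xsol x)"
        using lip by (simp add: dist_norm)
      also have "\<dots> \<le> L * (e / (L+1))"
        using h x L0 by (intro mult_left_mono) (auto simp: less_imp_le)
      also have "\<dots> < e" using e L0 by (simp add: field_simps)
      finally show "dist (f (picard f x0 n x)) (f (Xsol x)) < e" .
    qed
  qed
qed

lemma Xsol_eq: assumes t: "0 \<le> t" shows "Xsol t = x0 + integral {0..t} (\<lambda>s. f (Xsol s))"
proof -
  have ul: "uniform_limit {0..t} (\<lambda>n s. f (picard f x0 n s)) (\<lambda>s. f (Xsol s)) sequentially"
    using fX_unif[of t] .
  obtain I J where I: "\<And>n. ((\<lambda>s. f (picard f x0 n s)) has_integral I n) {0..t}"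
    and J: "((\<lambda>s. f (Xsol s)) has_integral J) {0..t}" and IJ: "I \<longlonglongrightarrow> J"
  proof -
    have cn: "\<And>n. continuous_on {0..t} (\<lambda>s. f (picard f x0 n s))"
      by (rule continuous_on_compose2[OF fcont picard_cont]) auto
    show ?thesis using uniform_limit_integral[OF ul cn sequentially_bot] that by blast
  qed
  have "(\<lambda>n. picard f x0 (Suc n) t) \<longlonglongrightarrow> x0 + J"
  proof -
    have "\<And>n. integral {0..t} (\<lambda>s. f (picard f x0 n s)) = I n"
      using I by (intro integral_unique)
    then show ?thesis using tendsto_add[OF tendsto_const IJ, of x0] by simp
  qed
  moreover have "(\<lambda>n. picard f x0 (Suc n) t) \<longlonglongrightarrow> Xsol t"
    using LIMSEQ_Suc[OF tendsto_uniform_limitI[OF picard_unif[of t], of t]] t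
    by (simp del: picard.simps)
  ultimately have "Xsol t = x0 + J" by (rule LIMSEQ_unique[rotated])
  then show ?thesis using integral_unique[OF J] by simp
qed

lemma Xsol_deriv: assumes t: "0 \<le> t"
  shows "(Xsol has_vector_derivative f (Xsol t)) (at t within {0..})"
proof -
  have c: "continuous_on {0..t+1} (\<lambda>s. f (Xsol s))"
    by (rule continuous_on_compose2[OF fcont Xsol_cont]) auto
  have "((\<lambda>u. x0 + integral {0..u} (\<lambda>s. f (Xsol s))) has_vector_derivative f (Xsol t)) (at t within {0..t+1})"
    using integral_has_vector_derivative[OF c, of t] t
    by (auto intro!: derivative_eq_intros)
  then have "(Xsol has_vector_derivative f (Xsol t)) (at t within {0..t+1})"
    by (rule has_vector_derivative_transform[rotated 2]) (use t Xsol_eq in auto)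
  moreover have "at t within {0..t+1} = at t within {0..}"
    by (rule at_within_nhd[where S="{..<t+1}"]) (use t in auto)
  ultimately show ?thesis by simp
qed

end

lemma ode_exists:
  fixes f :: "'a::euclidean_space \<Rightarrow> 'a"
  assumes "\<forall>x y. norm (f x - f y) \<le> L * norm (x - y)" "0 \<le> L"
  shows "\<exists>x. x 0 = x0 \<and> (\<forall>t\<ge>0. (x has_vector_derivative f (x t)) (at t within {0..}))"
proof (intro exI conjI allI impI)
  show "Xsol f x0 0 = x0" using Xsol_eq[OF assms, of 0] by simp
  fix t :: real assume "0 \<le> t"
  then show "(Xsol f x0 has_vector_derivative f (Xsol f x0 t)) (at t within {0..})"
    using Xsol_deriv[OF assms] by blast
qed

lemma norm2_cart: "(norm (x::real^'n::finite))^2 = (\<Sum>i\<in>UNIV. (x$i)^2)"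
  unfolding norm_vec_def L2_set_def by (simp add: sum_nonneg)

lemma Vbounds:
  fixes y :: "real^'n::finite"
  assumes "\<forall>i. 1 \<le> w i" "\<forall>i. w i \<le> K"
  shows "(norm y)^2 \<le> (\<Sum>i\<in>UNIV. w i * (y$i)^2)" "(\<Sum>i\<in>UNIV. w i * (y$i)^2) \<le> K * (norm y)^2"
proof -
  show "(norm y)^2 \<le> (\<Sum>i\<in>UNIV. w i * (y$i)^2)"
    unfolding norm2_cart using assms by (intro sum_mono) (simp add: mult_le_cancel_right1)
  show "(\<Sum>i\<in>UNIV. w i * (y$i)^2) \<le> K * (norm y)^2"
    unfolding norm2_cart sum_distrib_left using assms by (intro sum_mono mult_right_mono) auto
qed

lemma Vderiv:
  fixes x :: "real \<Rightarrow> real^'n::finite"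
  assumes "(x has_vector_derivative x') (at t within S)"
  shows "((\<lambda>t. \<Sum>i\<in>UNIV. w i * (x t $ i - c $ i)^2) has_real_derivative
           (\<Sum>i\<in>UNIV. 2 * (w i * (x t $ i - c $ i) * x' $ i))) (at t within S)"
proof -
  have d: "((\<lambda>t. x t $ i) has_real_derivative x' $ i) (at t within S)" for i
    using bounded_linear.has_vector_derivative[OF bounded_linear_vec_nth assms, of i]
    by (simp add: has_real_derivative_iff_has_vector_derivative)
  show ?thesis
    apply (rule DERIV_sum)
    apply (rule derivative_eq_intros d refl | simp)+
    done
qed

lemma deriv_at_pos:
  fixes f :: "real \<Rightarrow> real"
  assumes "(f has_real_derivative f') (at s within {0..})" "0 < s"
  shows "(f has_real_derivative f') (at s)"
proof -
  have "at s within {0..} = at s within UNIV"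
    by (rule at_within_nhd[where S="{0<..}"]) (use assms in auto)
  then show ?thesis using assms by simp
qed

lemma sol_cont:
  assumes "\<forall>t\<ge>0. (x has_vector_derivative F (x t)) (at t within {0..})"
  shows "continuous_on {0..} x"
  unfolding continuous_on_eq_continuous_within
proof
  fix t :: real assume "t \<in> {0..}"
  then have "(x has_vector_derivative F (x t)) (at t within {0..})" using assms by simp
  then show "continuous (at t within {0..}) x" by (rule has_vector_derivative_continuous)
qed

lemma confine:
  fixes x :: "real \<Rightarrow> real^'n::finite" and F :: "real^'n \<Rightarrow> real^'n"
  assumes sol: "\<forall>t\<ge>0. (x has_vector_derivative F (x t)) (at t within {0..})"
    and dec: "\<forall>z. dist z xs < r \<longrightarrow> (\<Sum>i\<in>UNIV. w i * (z$i - xs$i) * F z $ i) \<le> 0"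
    and w: "\<forall>i. 1 \<le> w i" "\<forall>i. w i \<le> K"
    and rho: "0 < \<rho>" "\<rho> \<le> r" and d0: "K * (dist (x 0) xs)^2 < \<rho>^2"
  shows "\<forall>t\<ge>0. dist (x t) xs < \<rho>"
proof (rule ccontr)
  define V where "V t = (\<Sum>i\<in>UNIV. w i * (x t $ i - xs $ i)^2)" for t
  have Vn: "(dist (x t) xs)^2 \<le> V t" "V t \<le> K * (dist (x t) xs)^2" for t
    using Vbounds[OF w, of "x t - xs"] unfolding V_def dist_norm by auto
  have cx: "continuous_on {0..} x" by (rule sol_cont[OF sol])
  assume "\<not> (\<forall>t\<ge>0. dist (x t) xs < \<rho>)"
  then obtain t1 where t1: "0 \<le> t1" "\<rho> \<le> dist (x t1) xs" by auto
  define S where "S = {0..} \<inter> (\<lambda>t. dist (x t) xs) -` {\<rho>..}"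
  have cd: "continuous_on {0..} (\<lambda>t. dist (x t) xs)"
    by (intro continuous_on_dist cx continuous_on_const)
  have cS: "closed S" unfolding S_def
    by (rule continuous_closed_preimage[OF cd]) simp_all
  have neS: "S \<noteq> {}" using t1 unfolding S_def by auto
  have bS: "bdd_below S" unfolding S_def by (auto intro: bdd_belowI[of _ 0])
  define T where "T = Inf S"
  have TS: "T \<in> S" unfolding T_def by (rule closed_contains_Inf[OF neS bS cS])
  have T0: "0 \<le> T" and dT: "\<rho> \<le> dist (x T) xs" using TS unfolding S_def by auto
  have before: "dist (x s) xs < \<rho>" if "0 \<le> s" "s < T" for s
  proof (rule ccontr)
    assume "\<not> dist (x s) xs < \<rho>"
    then have "s \<in> S" using that unfolding S_def by auto
    then have "T \<le> s" unfolding T_def by (rule cInf_lower[OF _ bS])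
    then show False using that by simp
  qed
  have x0r: "dist (x 0) xs < \<rho>"
  proof -
    have K1: "1 \<le> K"
    proof -
      have "1 \<le> w undefined" "w undefined \<le> K" using w by auto
      then show ?thesis by linarith
    qed
    have "(dist (x 0) xs)^2 \<le> K * (dist (x 0) xs)^2"
      using mult_right_mono[OF K1 zero_le_power2[of "dist (x 0) xs"]] by simp
    then have "(dist (x 0) xs)^2 < \<rho>^2" using d0 by (rule le_less_trans)
    then show ?thesis by (rule power_less_imp_less_base) (use rho in simp)
  qed
  have "T \<noteq> 0" using dT x0r by auto
  have cV: "continuous_on {0..T} V"
    unfolding V_def
  proof -
    have "continuous_on {0..T} x" by (rule continuous_on_subset[OF cx]) auto
    then show "continuous_on {0..T} (\<lambda>t. \<Sum>i\<in>UNIV. w i * (x t $ i - xs $ i)^2)"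
      by (intro continuous_intros)
  qed
  have "V T \<le> V 0"
  proof (rule DERIV_nonpos_imp_decreasing_open[OF T0 _ cV])
    fix s assume s: "0 < s" "s < T"
    have "(V has_real_derivative (\<Sum>i\<in>UNIV. 2 * (w i * (x s $ i - xs $ i) * F (x s) $ i))) (at s)"
      unfolding V_def by (rule deriv_at_pos[OF Vderiv]) (use sol s in auto)
    moreover have "(\<Sum>i\<in>UNIV. 2 * (w i * (x s $ i - xs $ i) * F (x s) $ i)) \<le> 0"
    proof -
      have "dist (x s) xs < r" using before[of s] s rho by auto
      then have "(\<Sum>i\<in>UNIV. w i * (x s $ i - xs$i) * F (x s) $ i) \<le> 0" using dec by blast
      then show ?thesis by (simp add: sum_distrib_left[symmetric])
    qed
    ultimately show "\<exists>y. (V has_real_derivative y) (at s) \<and> y \<le> 0" by blast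
  qed
  moreover have "V 0 < \<rho>^2" using Vn(2)[of 0] d0 by simp
  moreover have "\<rho>^2 \<le> V T" by (rule order_trans[OF power_mono[OF dT] Vn(1)]) (use rho in simp)
  ultimately show False by simp
qed

lemma decay:
  fixes x :: "real \<Rightarrow> real^'n::finite" and F :: "real^'n \<Rightarrow> real^'n"
  assumes sol: "\<forall>t\<ge>0. (x has_vector_derivative F (x t)) (at t within {0..})"
    and conf: "\<forall>t\<ge>0. dist (x t) xs < r"
    and dec: "\<forall>z. dist z xs < r \<longrightarrow> (\<Sum>i\<in>UNIV. w i * (z$i - xs$i) * F z $ i) \<le> - g * (\<Sum>i\<in>UNIV. w i * (z$i - xs$i)^2)"
    and w: "\<forall>i. 1 \<le> w i" "\<forall>i. w i \<le> K" and g: "0 < g"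
  shows "(x \<longlongrightarrow> xs) at_top"
proof -
  define V where "V t = (\<Sum>i\<in>UNIV. w i * (x t $ i - xs $ i)^2)" for t
  have Vn: "(dist (x t) xs)^2 \<le> V t" for t
    using Vbounds[OF w, of "x t - xs"] unfolding V_def dist_norm by auto
  have cx: "continuous_on {0..} x" by (rule sol_cont[OF sol])
  define h where "h t = V t * exp (2 * g * t)" for t
  have hdec: "h t \<le> h 0" if t: "0 \<le> t" for t
  proof (rule DERIV_nonpos_imp_decreasing_open[OF t])
    have "continuous_on {0..t} x" by (rule continuous_on_subset[OF cx]) auto
    then show "continuous_on {0..t} h"
      unfolding h_def V_def by (intro continuous_intros)
    fix s assume s: "0 < s" "s < t"
    let ?Vd = "\<Sum>i\<in>UNIV. 2 * (w i * (x s $ i - xs $ i) * F (x s) $ i)"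
    have dV: "(V has_real_derivative ?Vd) (at s)"
      unfolding V_def by (rule deriv_at_pos[OF Vderiv]) (use sol s in auto)
    have "(h has_real_derivative (?Vd * exp (2 * g * s) + V s * (exp (2 * g * s) * (2*g)))) (at s)"
      unfolding h_def by (rule derivative_eq_intros dV refl | simp)+
    moreover have "?Vd * exp (2 * g * s) + V s * (exp (2 * g * s) * (2*g)) \<le> 0"
    proof -
      have "dist (x s) xs < r" using conf s by auto
      then have "(\<Sum>i\<in>UNIV. w i * (x s $ i - xs$i) * F (x s) $ i) \<le> - g * V s"
        using dec unfolding V_def by blast
      then have "?Vd \<le> - 2 * g * V s" by (simp add: sum_distrib_left[symmetric])
      then have "?Vd * exp (2 * g * s) \<le> (- 2 * g * V s) * exp (2 * g * s)"
        by (rule mult_right_mono) simp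
      then show ?thesis by (simp add: algebra_simps)
    qed
    ultimately show "\<exists>y. (h has_real_derivative y) (at s) \<and> y \<le> 0" by blast
  qed
  have bound: "(dist (x t) xs)^2 \<le> V 0 * exp (- (2 * g * t))" if "0 \<le> t" for t
  proof -
    have "V t * exp (2 * g * t) \<le> V 0" using hdec[OF that] unfolding h_def by simp
    then have "V t \<le> V 0 * exp (- (2 * g * t))"
      by (simp add: exp_minus field_simps)
    then show ?thesis using Vn[of t] by (rule order_trans[rotated])
  qed
  have lim0: "((\<lambda>t. V 0 * exp (- (2 * g * t))) \<longlongrightarrow> 0) at_top"
    using g by real_asymp
  have "((\<lambda>t. (dist (x t) xs)^2) \<longlongrightarrow> 0) at_top"
  proof (rule tendsto_sandwich[OF _ _ tendsto_const lim0])
    show "\<forall>\<^sub>F t in at_top. 0 \<le> (dist (x t) xs)^2" by simp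
    show "\<forall>\<^sub>F t in at_top. (dist (x t) xs)^2 \<le> V 0 * exp (- (2 * g * t))"
      using eventually_ge_at_top[of 0] by (rule eventually_mono) (rule bound)
  qed
  then have "((\<lambda>t. sqrt ((dist (x t) xs)^2)) \<longlongrightarrow> sqrt 0) at_top"
    by (rule tendsto_real_sqrt)
  moreover have "\<And>t. sqrt ((dist (x t) xs)^2) = dist (x t) xs" by simp
  ultimately have "((\<lambda>t. dist (x t) xs) \<longlongrightarrow> 0) at_top" unfolding real_sqrt_zero by simp
  then show ?thesis by (subst tendsto_dist_iff)
qed

lemma sq_small:
  fixes K a d rho :: real
  assumes "1 \<le> K" "0 \<le> a" "a < rho / K" "0 < rho"
  shows "K * a^2 < rho^2"
proof -
  have Ka: "K * a < rho" using assms by (simp add: field_simps)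
  have "a \<le> K * a" using assms by (simp add: mult_le_cancel_right1)
  then have "a < rho" using Ka by linarith
  have "K * a^2 = (K*a) * a" by (simp add: power2_eq_square)
  also have "\<dots> < rho * rho"
    using Ka \<open>a < rho\<close> assms by (intro mult_strict_mono) auto
  finally show ?thesis by (simp add: power2_eq_square)
qed

lemma asym_engine:
  fixes J D :: "real^'n::finite^'n" and w :: "'n \<Rightarrow> real"
  assumes fp: "tln_fixed_point J D b xs"
    and dec: "\<forall>z. dist z xs < r \<longrightarrow> (\<Sum>i\<in>UNIV. w i * (z$i - xs$i) * tln_field J D b z $ i)
              \<le> - g * (\<Sum>i\<in>UNIV. w i * (z$i - xs$i)^2)"
    and w: "\<forall>i. 1 \<le> w i" "\<forall>i. w i \<le> K" and g: "0 < g" and r: "0 < r"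
  shows "tln_asymp_stable_fp J D b xs"
proof -
  have K1: "1 \<le> K"
  proof -
    have "1 \<le> w undefined" "w undefined \<le> K" using w by auto
    then show ?thesis by linarith
  qed
  have dec0: "\<forall>z. dist z xs < r \<longrightarrow> (\<Sum>i\<in>UNIV. w i * (z$i - xs$i) * tln_field J D b z $ i) \<le> 0"
  proof (intro allI impI)
    fix z assume "dist z xs < r"
    then have "(\<Sum>i\<in>UNIV. w i * (z$i - xs$i) * tln_field J D b z $ i) \<le> - g * (\<Sum>i\<in>UNIV. w i * (z$i - xs$i)^2)"
      using dec by blast
    moreover have "0 \<le> (\<Sum>i\<in>UNIV. w i * (z$i - xs$i)^2)"
    proof (intro sum_nonneg mult_nonneg_nonneg)
      fix i show "0 \<le> w i" using w(1) by (meson order_trans zero_le_one)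
    qed simp
    then have "0 \<le> g * (\<Sum>i\<in>UNIV. w i * (z$i - xs$i)^2)" using g by simp
    ultimately show "(\<Sum>i\<in>UNIV. w i * (z$i - xs$i) * tln_field J D b z $ i) \<le> 0"
      by linarith
  qed
  have conf: "\<forall>t\<ge>0. dist (x t) xs < rho"
    if "0 < rho" "rho \<le> r" "dist x0 xs < rho / K" "tln_solution J D b x0 x" for rho x0 and x :: "real \<Rightarrow> real^'n"
  proof (rule confine[OF _ dec0 w that(1,2)])
    show "\<forall>t\<ge>0. (x has_vector_derivative tln_field J D b (x t)) (at t within {0..})"
      using that(4) unfolding tln_solution_def by blast
    have "x 0 = x0" using that(4) unfolding tln_solution_def by blast
    then show "K * (dist (x 0) xs)^2 < rho^2"
      using sq_small[OF K1 zero_le_dist that(3) that(1)] by simp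
  qed
  have st: "tln_stable_fp J D b xs"
    unfolding tln_stable_fp_def
  proof (intro conjI fp allI impI)
    fix e :: real assume e: "0 < e"
    let ?rho = "min e r"
    show "\<exists>d>0. \<forall>x0 x. nonneg_vec x0 \<and> dist x0 xs < d \<and> tln_solution J D b x0 x \<longrightarrow> (\<forall>t\<ge>0. dist (x t) xs < e)"
    proof (intro exI[of _ "?rho / K"] conjI allI impI)
      show "0 < ?rho / K" using e r K1 by simp
      fix x0 x and t :: real assume h: "nonneg_vec x0 \<and> dist x0 xs < ?rho / K \<and> tln_solution J D b x0 x" and t: "0 \<le> t"
      have "dist (x t) xs < ?rho" using conf[of ?rho x0 x] h t e r by auto
      then show "dist (x t) xs < e" by simp
    qed
  qed
  show ?thesis
    unfolding tln_asymp_stable_fp_def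
  proof (intro conjI st exI[of _ "r / K"] allI impI)
    show "0 < r / K" using r K1 by simp
    fix x0 x assume h: "nonneg_vec x0 \<and> dist x0 xs < r / K \<and> tln_solution J D b x0 x"
    have c: "\<forall>t\<ge>0. dist (x t) xs < r" using conf[of r x0 x] h r by auto
    show "(x \<longlongrightarrow> xs) at_top"
    proof (rule decay[OF _ c dec w g])
      show "\<forall>t\<ge>0. (x has_vector_derivative tln_field J D b (x t)) (at t within {0..})"
        using h unfolding tln_solution_def by blast
    qed
  qed
qed

lemma amgm: "0 < (a::real) \<Longrightarrow> x * y \<le> a/2 * x^2 + 1/(2*a) * y^2"
proof -
  assume a: "0 < a"
  have "0 \<le> (a*x - y)^2" by simp
  then have "2*a*(x*y) \<le> a^2 * x^2 + y^2" by (simp add: power2_diff power_mult_distrib algebra_simps)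
  then have "x*y \<le> (a^2 * x^2 + y^2) / (2*a)" using a by (simp add: field_simps)
  also have "\<dots> = a/2 * x^2 + 1/(2*a) * y^2" using a by (simp add: field_simps power2_eq_square)
  finally show ?thesis .
qed

lemma cross:
  fixes y :: "'n::finite \<Rightarrow> real" and a :: "'n \<Rightarrow> 'n \<Rightarrow> real"
  assumes c: "0 < c" and Jsq: "\<forall>j. (\<Sum>i\<in>A. (a i j)^2) \<le> Q"
  shows "(\<Sum>i\<in>A. \<Sum>j\<in>B. y i * a i j * y j)
     \<le> c/2 * (\<Sum>i\<in>A. (y i)^2) + real CARD('n) / (2*c) * Q * (\<Sum>j\<in>B. (y j)^2)"
proof -
  define N where "N = real CARD('n)"
  have N: "0 < N" unfolding N_def by simp
  define al where "al = c / N"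
  have al: "0 < al" unfolding al_def using c N by simp
  have "(\<Sum>i\<in>A. \<Sum>j\<in>B. y i * a i j * y j)
     \<le> (\<Sum>i\<in>A. \<Sum>j\<in>B. al/2 * (y i)^2 + 1/(2*al) * ((a i j)^2 * (y j)^2))"
  proof (intro sum_mono)
    fix i j
    have "y i * (a i j * y j) \<le> al/2 * (y i)^2 + 1/(2*al) * (a i j * y j)^2" by (rule amgm[OF al])
    then show "y i * a i j * y j \<le> al/2 * (y i)^2 + 1/(2*al) * ((a i j)^2 * (y j)^2)"
      by (simp add: power_mult_distrib mult.assoc)
  qed
  also have "\<dots> = al/2 * real (card B) * (\<Sum>i\<in>A. (y i)^2) + 1/(2*al) * (\<Sum>j\<in>B. (\<Sum>i\<in>A. (a i j)^2) * (y j)^2)"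
    by (simp add: sum.distrib sum_distrib_left sum_distrib_right sum.swap[of _ A B] algebra_simps)
  also have "\<dots> \<le> c/2 * (\<Sum>i\<in>A. (y i)^2) + N / (2*c) * Q * (\<Sum>j\<in>B. (y j)^2)"
  proof (rule add_mono)
    have "card B \<le> CARD('n)" by (rule card_mono) auto
    then have "al/2 * real (card B) \<le> al/2 * N" unfolding N_def using al by simp
    also have "\<dots> = c/2" unfolding al_def using N by simp
    finally show "al/2 * real (card B) * (\<Sum>i\<in>A. (y i)^2) \<le> c/2 * (\<Sum>i\<in>A. (y i)^2)"
      by (rule mult_right_mono) (simp add: sum_nonneg)
    have "(\<Sum>j\<in>B. (\<Sum>i\<in>A. (a i j)^2) * (y j)^2) \<le> (\<Sum>j\<in>B. Q * (y j)^2)"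
      using Jsq by (intro sum_mono mult_right_mono) auto
    then have "1/(2*al) * (\<Sum>j\<in>B. (\<Sum>i\<in>A. (a i j)^2) * (y j)^2) \<le> 1/(2*al) * (\<Sum>j\<in>B. Q * (y j)^2)"
      using al by (intro mult_left_mono) auto
    also have "\<dots> = N / (2*c) * Q * (\<Sum>j\<in>B. (y j)^2)"
      unfolding al_def using N c by (simp add: sum_distrib_left field_simps)
    finally show "1/(2*al) * (\<Sum>j\<in>B. (\<Sum>i\<in>A. (a i j)^2) * (y j)^2) \<le> N / (2*c) * Q * (\<Sum>j\<in>B. (y j)^2)" .
  qed
  finally show ?thesis unfolding N_def .
qed


lemma quad_bound:
  fixes y d :: "'n::finite \<Rightarrow> real" and W J :: "'n \<Rightarrow> 'n \<Rightarrow> real"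
  assumes c: "0 < c" and nd: "(\<Sum>i\<in>\<tau>. \<Sum>j\<in>\<tau>. y i * W i j * y j) \<le> -c * (\<Sum>i\<in>\<tau>. (y i)^2)"
    and dm: "0 < dm" "\<forall>i. dm \<le> d i" and Q: "\<forall>j. (\<Sum>i\<in>\<tau>. (J i j)^2) \<le> Q" "0 \<le> Q"
    and K: "K = 1 + real CARD('n) * Q / (c * dm)" and g: "g = min (c/2) (dm/2)"
  shows "(\<Sum>i\<in>\<tau>. y i * ((\<Sum>j\<in>\<tau>. W i j * y j) + (\<Sum>j\<in>-\<tau>. J i j * y j))) + (\<Sum>i\<in>-\<tau>. K * y i * (- d i * y i))
        \<le> - g * ((\<Sum>i\<in>\<tau>. (y i)^2) + K * (\<Sum>i\<in>-\<tau>. (y i)^2))"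
proof -
  define N where "N = real CARD('n)"
  define S1 where "S1 = (\<Sum>i\<in>\<tau>. (y i)^2)"
  define S2 where "S2 = (\<Sum>i\<in>-\<tau>. (y i)^2)"
  have S1: "0 \<le> S1" and S2: "0 \<le> S2" unfolding S1_def S2_def by (auto intro: sum_nonneg)
  have N: "0 < N" unfolding N_def by simp
  have K1: "1 \<le> K" unfolding K using N c dm Q by simp
  have split: "(\<Sum>i\<in>\<tau>. y i * ((\<Sum>j\<in>\<tau>. W i j * y j) + (\<Sum>j\<in>-\<tau>. J i j * y j)))
      = (\<Sum>i\<in>\<tau>. \<Sum>j\<in>\<tau>. y i * W i j * y j) + (\<Sum>i\<in>\<tau>. \<Sum>j\<in>-\<tau>. y i * J i j * y j)"
    by (simp add: distrib_left sum.distrib sum_distrib_left mult.assoc)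
  have cr: "(\<Sum>i\<in>\<tau>. \<Sum>j\<in>-\<tau>. y i * J i j * y j) \<le> c/2 * S1 + N / (2*c) * Q * S2"
    unfolding S1_def S2_def N_def by (rule cross[OF c Q(1)])
  have off: "(\<Sum>i\<in>-\<tau>. K * y i * (- d i * y i)) \<le> - (K * dm) * S2"
  proof -
    have "(\<Sum>i\<in>-\<tau>. K * y i * (- d i * y i)) = - (\<Sum>i\<in>-\<tau>. K * d i * (y i)^2)"
      by (simp add: sum_negf[symmetric] power2_eq_square algebra_simps)
    also have "\<dots> \<le> - (\<Sum>i\<in>-\<tau>. K * dm * (y i)^2)"
    proof -
      have "(\<Sum>i\<in>-\<tau>. K * dm * (y i)^2) \<le> (\<Sum>i\<in>-\<tau>. K * d i * (y i)^2)"
        using dm K1 by (intro sum_mono mult_right_mono mult_left_mono) auto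
      then show ?thesis by linarith
    qed
    also have "\<dots> = - (K * dm) * S2" unfolding S2_def by (simp add: sum_distrib_left sum_negf)
    finally show ?thesis .
  qed
  have Kdm: "K * dm = dm + N * Q / c" unfolding K N_def using c dm by (simp add: field_simps)
  have lhs: "(\<Sum>i\<in>\<tau>. y i * ((\<Sum>j\<in>\<tau>. W i j * y j) + (\<Sum>j\<in>-\<tau>. J i j * y j))) + (\<Sum>i\<in>-\<tau>. K * y i * (- d i * y i))
      \<le> -c * S1 + (c/2 * S1 + N / (2*c) * Q * S2) + (- (K * dm) * S2)"
    unfolding split using nd cr off unfolding S1_def by linarith
  also have "\<dots> = - (c/2) * S1 - (dm + N * Q / (2*c)) * S2"
    unfolding Kdm by (simp add: field_simps)
  also have "\<dots> \<le> - g * S1 - g * K * S2"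
  proof -
    have "g * S1 \<le> (c/2) * S1" unfolding g using S1 by (intro mult_right_mono) auto
    moreover have "g * K * S2 \<le> (dm + N * Q / (2*c)) * S2"
    proof (rule mult_right_mono[OF _ S2])
      have "g * K \<le> dm/2 * K" unfolding g using K1 by (intro mult_right_mono) auto
      also have "\<dots> = dm/2 + N * Q / (2*c)" unfolding K N_def using c dm by (simp add: field_simps)
      also have "\<dots> \<le> dm + N * Q / (2*c)" using dm by simp
      finally show "g * K \<le> dm + N * Q / (2*c)" .
    qed
    ultimately show ?thesis by linarith
  qed
  finally show ?thesis unfolding S1_def S2_def by (simp add: algebra_simps)
qed


lemma split_sum: "sum f (UNIV::'n::finite set) = sum f \<tau> + sum f (-\<tau>)"
  using sum.Int_Diff[of UNIV f \<tau>] by (simp add: Compl_eq_Diff_UNIV)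

lemma Dmul:
  fixes D :: "real^'n::finite^'n"
  assumes "\<forall>i j. i \<noteq> j \<longrightarrow> D$i$j = 0"
  shows "(D *v x)$i = D$i$i * x$i"
proof -
  have "(D *v x)$i = (\<Sum>j\<in>UNIV. D$i$j * x$j)" by (simp add: matrix_vector_mult_def)
  also have "\<dots> = (\<Sum>j\<in>UNIV. if j = i then D$i$i * x$i else 0)"
    using assms by (intro sum.cong) auto
  also have "\<dots> = D$i$i * x$i" by simp
  finally show ?thesis .
qed

lemma Jdiff_bound:
  fixes J :: "real^'n::finite^'n"
  shows "\<bar>(J *v z)$i - (J *v x)$i\<bar> \<le> (\<Sum>i\<in>UNIV. \<Sum>j\<in>UNIV. \<bar>J$i$j\<bar>) * dist z x"
proof -
  have "(J *v z)$i - (J *v x)$i = (\<Sum>j\<in>UNIV. J$i$j * (z$j - x$j))"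
    by (simp add: matrix_vector_mult_def sum_subtractf[symmetric] algebra_simps)
  also have "\<bar>\<dots>\<bar> \<le> (\<Sum>j\<in>UNIV. \<bar>J$i$j\<bar> * dist z x)"
  proof -
    have "\<bar>\<Sum>j\<in>UNIV. J$i$j * (z$j - x$j)\<bar> \<le> (\<Sum>j\<in>UNIV. \<bar>J$i$j * (z$j - x$j)\<bar>)"
      by (rule sum_abs)
    also have "\<dots> \<le> (\<Sum>j\<in>UNIV. \<bar>J$i$j\<bar> * dist z x)"
    proof (rule sum_mono)
      fix j
      have "\<bar>z$j - x$j\<bar> \<le> dist z x"
        using component_le_norm_cart[of "z - x" j] by (simp add: dist_norm)
      then show "\<bar>J$i$j * (z$j - x$j)\<bar> \<le> \<bar>J$i$j\<bar> * dist z x"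
        by (simp add: abs_mult mult_left_mono)
    qed
    finally show ?thesis .
  qed
  also have "\<dots> = (\<Sum>j\<in>UNIV. \<bar>J$i$j\<bar>) * dist z x" by (simp add: sum_distrib_right)
  also have "\<dots> \<le> (\<Sum>i\<in>UNIV. \<Sum>j\<in>UNIV. \<bar>J$i$j\<bar>) * dist z x"
  proof (rule mult_right_mono)
    show "(\<Sum>j\<in>UNIV. \<bar>J$i$j\<bar>) \<le> (\<Sum>i\<in>UNIV. \<Sum>j\<in>UNIV. \<bar>J$i$j\<bar>)"
      by (rule member_le_sum[of i UNIV "\<lambda>i. \<Sum>j\<in>UNIV. \<bar>J$i$j\<bar>"]) (auto intro: sum_nonneg)
  qed simp
  finally show ?thesis .
qed


lemma stable_set_engine:
  fixes J D :: "real^'n::finite^'n"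
  assumes Dd: "\<forall>i j. i \<noteq> j \<longrightarrow> D$i$j = 0" "\<forall>i. 0 < D$i$i" and ne: "\<tau> \<noteq> {}"
    and c: "0 < c"
    and nd: "\<forall>y::'n\<Rightarrow>real. (\<Sum>i\<in>\<tau>. \<Sum>j\<in>\<tau>. y i * (J$i$j - D$i$j) * y j) \<le> -c * (\<Sum>i\<in>\<tau>. (y i)^2)"
  shows "stable_set J D \<tau>"
proof -
  define xs :: "real^'n" where "xs = (\<chi> i. if i \<in> \<tau> then 1 else 0)"
  define b :: "real^'n" where "b = (\<chi> i. if i \<in> \<tau> then D$i$i - (J *v xs)$i else - \<bar>(J *v xs)$i\<bar> - 1)"
  define dm where "dm = Min (range (\<lambda>i. D$i$i))"
  have dm: "0 < dm" "\<forall>i. dm \<le> D$i$i"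
    unfolding dm_def using Dd(2) by (auto simp: Min_gr_iff)
  define m where "m = min 1 dm"
  have m: "0 < m" "m \<le> 1" "m \<le> dm" unfolding m_def using dm by auto
  define Jn where "Jn = (\<Sum>i\<in>UNIV. \<Sum>j\<in>UNIV. \<bar>J$i$j\<bar>)"
  have Jn: "0 \<le> Jn" unfolding Jn_def by (auto intro: sum_nonneg)
  define r where "r = m / (Jn + 1)"
  have r: "0 < r" unfolding r_def using m Jn by simp
  have close: "\<bar>(J *v z)$i - (J *v xs)$i\<bar> < m" if "dist z xs < r" for z i
  proof -
    have "\<bar>(J *v z)$i - (J *v xs)$i\<bar> \<le> Jn * dist z xs" unfolding Jn_def by (rule Jdiff_bound)
    also have "\<dots> \<le> Jn * r" using that Jn by (intro mult_left_mono) auto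
    also have "\<dots> < m" unfolding r_def using m Jn by (simp add: field_simps)
    finally show ?thesis .
  qed
  have Dm: "(D *v x)$i = D$i$i * x$i" for x i by (rule Dmul[OF Dd(1)])
  define y where "y z i = z$i - xs$i" for z i
  have fld_in: "tln_field J D b z $ i = (\<Sum>j\<in>\<tau>. (J$i$j - D$i$j) * y z j) + (\<Sum>j\<in>-\<tau>. J$i$j * y z j)"
    if "dist z xs < r" "i \<in> \<tau>" for z i
  proof -
    have "dm \<le> D$i$i" using dm by auto
    then have inp: "0 < (J *v z + b)$i"
      using close[OF that(1), of i] that(2) m unfolding b_def by (simp add: abs_less_iff)
    have "tln_field J D b z $ i = - (D$i$i * z$i) + ((J *v z)$i + D$i$i - (J *v xs)$i)"
      using inp that(2) unfolding tln_field_def relu_vec_def b_def by (simp add: Dm)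
    also have "\<dots> = (\<Sum>j\<in>UNIV. J$i$j * y z j) - D$i$i * y z i"
      using that(2) by (simp add: y_def xs_def matrix_vector_mult_def sum_subtractf[symmetric] algebra_simps)
    also have "\<dots> = (\<Sum>j\<in>\<tau>. (J$i$j - D$i$j) * y z j) + (\<Sum>j\<in>-\<tau>. J$i$j * y z j)"
    proof -
      have "(\<Sum>j\<in>\<tau>. D$i$j * y z j) = (\<Sum>j\<in>\<tau>. if j = i then D$i$i * y z i else 0)"
        using Dd(1) by (intro sum.cong) auto
      also have "\<dots> = D$i$i * y z i" using that(2) by simp
      finally have "(\<Sum>j\<in>\<tau>. D$i$j * y z j) = D$i$i * y z i" .
      then show ?thesis
        using split_sum[of "\<lambda>j. J$i$j * y z j" \<tau>]
        by (simp add: left_diff_distrib sum_subtractf)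
    qed
    finally show ?thesis .
  qed
  have fld_out: "tln_field J D b z $ i = - D$i$i * y z i"
    if "dist z xs < r" "i \<notin> \<tau>" for z i
  proof -
    have "(J *v z)$i < (J *v xs)$i + m" using close[OF that(1), of i] by linarith
    then have inp: "(J *v z + b)$i \<le> 0"
      using that(2) m unfolding b_def by auto
    then show ?thesis
      using that(2) unfolding tln_field_def relu_vec_def y_def xs_def by (simp add: Dm)
  qed
  define Q where "Q = (\<Sum>i\<in>UNIV. \<Sum>j\<in>UNIV. (J$i$j)^2)"
  have Q: "\<forall>j. (\<Sum>i\<in>\<tau>. (J$i$j)^2) \<le> Q" "0 \<le> Q"
  proof -
    show "0 \<le> Q" unfolding Q_def by (intro sum_nonneg) simp
    show "\<forall>j. (\<Sum>i\<in>\<tau>. (J$i$j)^2) \<le> Q"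
    proof
      fix j
      have "(\<Sum>i\<in>\<tau>. (J$i$j)^2) \<le> (\<Sum>i\<in>UNIV. (J$i$j)^2)" by (rule sum_mono2) auto
      also have "\<dots> \<le> (\<Sum>i\<in>UNIV. \<Sum>j'\<in>UNIV. (J$i$j')^2)"
        by (intro sum_mono member_le_sum) auto
      also have "\<dots> = Q" unfolding Q_def ..
      finally show "(\<Sum>i\<in>\<tau>. (J$i$j)^2) \<le> Q" .
    qed
  qed
  define K where "K = 1 + real CARD('n) * Q / (c * dm)"
  define g where "g = min (c/2) (dm/2)"
  have K1: "1 \<le> K" unfolding K_def using c dm Q by simp
  have g: "0 < g" unfolding g_def using c dm by simp
  define w where "w i = (if i \<in> \<tau> then 1 else K)" for i
  have w: "\<forall>i. 1 \<le> w i" "\<forall>i. w i \<le> K" unfolding w_def using K1 by auto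
  have dec: "\<forall>z. dist z xs < r \<longrightarrow> (\<Sum>i\<in>UNIV. w i * (z$i - xs$i) * tln_field J D b z $ i)
              \<le> - g * (\<Sum>i\<in>UNIV. w i * (z$i - xs$i)^2)"
  proof (intro allI impI)
    fix z assume z: "dist z xs < r"
    have L: "(\<Sum>i\<in>UNIV. w i * (z$i - xs$i) * tln_field J D b z $ i)
      = (\<Sum>i\<in>\<tau>. y z i * ((\<Sum>j\<in>\<tau>. (J$i$j - D$i$j) * y z j) + (\<Sum>j\<in>-\<tau>. J$i$j * y z j)))
        + (\<Sum>i\<in>-\<tau>. K * y z i * (- D$i$i * y z i))"
      unfolding split_sum[of _ \<tau>]
      by (intro arg_cong2[where f="(+)"] sum.cong) (auto simp: w_def y_def fld_in[OF z] fld_out[OF z])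
    have R: "(\<Sum>i\<in>UNIV. w i * (z$i - xs$i)^2) = (\<Sum>i\<in>\<tau>. (y z i)^2) + K * (\<Sum>i\<in>-\<tau>. (y z i)^2)"
      unfolding split_sum[of _ \<tau>] sum_distrib_left
      by (intro arg_cong2[where f="(+)"] sum.cong) (auto simp: w_def y_def)
    show "(\<Sum>i\<in>UNIV. w i * (z$i - xs$i) * tln_field J D b z $ i) \<le> - g * (\<Sum>i\<in>UNIV. w i * (z$i - xs$i)^2)"
      unfolding L R
      by (rule quad_bound[OF c _ dm Q K_def g_def]) (use nd in blast)
  qed
  have fp: "tln_fixed_point J D b xs"
    unfolding tln_fixed_point_def nonneg_vec_def
  proof
    show "\<forall>i. 0 \<le> xs $ i" unfolding xs_def by simp
    have "dist xs xs < r" using r by simp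
    show "tln_field J D b xs = 0"
    proof (rule vec_eq_iff[THEN iffD2], rule allI)
      fix i
      show "tln_field J D b xs $ i = 0 $ i"
        using fld_in[OF \<open>dist xs xs < r\<close>, of i] fld_out[OF \<open>dist xs xs < r\<close>, of i]
        by (cases "i \<in> \<tau>") (simp_all add: y_def)
    qed
  qed
  have "tln_asymp_stable_fp J D b xs" by (rule asym_engine[OF fp dec w g r])
  moreover have "supp_vec xs = \<tau>" unfolding supp_vec_def xs_def by auto
  ultimately show ?thesis unfolding stable_set_def using ne by blast
qed

lemma hvd_Un:
  "(f has_vector_derivative f') (at x within s) \<Longrightarrow> (f has_vector_derivative f') (at x within t)
   \<Longrightarrow> (f has_vector_derivative f') (at x within s \<union> t)"
  unfolding has_vector_derivative_def has_derivative_within using Lim_within_Un by blast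

lemma glue:
  fixes x1 y :: "real \<Rightarrow> 'a::real_normed_vector"
  assumes T: "0 \<le> T"
    and d1: "\<And>t. t \<in> {0..T} \<Longrightarrow> (x1 has_vector_derivative F (x1 t)) (at t within {0..T})"
    and y0: "y 0 = x1 T"
    and dy: "\<And>s. 0 \<le> s \<Longrightarrow> (y has_vector_derivative F (y s)) (at s within {0..})"
  defines "x \<equiv> \<lambda>t. if t \<le> T then x1 t else y (t - T)"
  shows "\<forall>t\<ge>0. (x has_vector_derivative F (x t)) (at t within {0..})"
proof (intro allI impI)
  fix t :: real assume t: "0 \<le> t"
  have L: "(x has_vector_derivative F (x t)) (at t within {0..T})" if "t \<le> T"
  proof -
    have "(x1 has_vector_derivative F (x1 t)) (at t within {0..T})" using d1 t that by auto
    then have "(x has_vector_derivative F (x1 t)) (at t within {0..T})"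
      by (rule has_vector_derivative_transform[rotated 2]) (use t that in \<open>auto simp: x_def\<close>)
    then show ?thesis using that by (simp add: x_def)
  qed
  have R: "(x has_vector_derivative F (x t)) (at t within {T..})" if "T \<le> t"
  proof -
    have xe: "x s = y (s - T)" if "T \<le> s" for s using that y0 by (auto simp: x_def)
    have "((y \<circ> (\<lambda>s. s - T)) has_vector_derivative 1 *\<^sub>R F (y (t - T))) (at t within {T..})"
    proof (rule vector_diff_chain_within)
      show "((\<lambda>s. s - T) has_vector_derivative 1) (at t within {T..})"
        by (auto intro!: derivative_eq_intros)
      have "(\<lambda>s. s - T) ` {T..} = {0..}"
        by (auto simp: image_iff intro!: bexI[where x="_ + T"])
      then show "(y has_vector_derivative F (y (t - T))) (at (t - T) within (\<lambda>s. s - T) ` {T..})"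
        using dy[of "t - T"] that by simp
    qed
    then have "((\<lambda>s. y (s - T)) has_vector_derivative F (y (t - T))) (at t within {T..})"
      by (simp add: o_def)
    then have "(x has_vector_derivative F (y (t - T))) (at t within {T..})"
      by (rule has_vector_derivative_transform[rotated 2]) (use that xe in auto)
    then show ?thesis using xe[OF that] by simp
  qed
  consider "t < T" | "t = T" | "T < t" by linarith
  then show "(x has_vector_derivative F (x t)) (at t within {0..})"
  proof cases
    case 1
    have "at t within {0..T} = at t within {0..}"
      by (rule at_within_nhd[where S="{..<T}"]) (use 1 t in auto)
    then show ?thesis using L 1 by simp
  next
    case 2
    have "{0..} = {0..T} \<union> {T..}" using T by auto
    then show ?thesis using hvd_Un[OF L R] 2 by simp
  next
    case 3
    have "at t within {T..} = at t within {0..}"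
      by (rule at_within_nhd[where S="{T<..}"]) (use 3 t T in auto)
    then show ?thesis using R 3 by simp
  qed
qed

lemma relu_lip: "norm (relu_vec a - relu_vec c) \<le> norm (a - (c::real^'n::finite))"
  by (rule norm_le_componentwise_cart) (auto simp: relu_vec_def)

lemma tln_lip:
  fixes J D :: "real^'n::finite^'n"
  shows "\<exists>L\<ge>0. \<forall>x y. norm (tln_field J D b x - tln_field J D b y) \<le> L * norm (x - y)"
proof -
  obtain K1' where K1': "\<And>x. norm (D *v x) \<le> norm x * K1'"
    using bounded_linear.bounded[OF matrix_vector_mul_bounded_linear[of D]] by blast
  obtain K2' where K2': "\<And>x. norm (J *v x) \<le> norm x * K2'"
    using bounded_linear.bounded[OF matrix_vector_mul_bounded_linear[of J]] by blast
  define K1 where "K1 = max K1' 0"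
  define K2 where "K2 = max K2' 0"
  have K1p: "0 \<le> K1" and K2p: "0 \<le> K2" unfolding K1_def K2_def by auto
  have K1: "norm (D *v x) \<le> norm x * K1" for x
    using K1'[of x] mult_left_mono[of K1' K1 "norm x"] unfolding K1_def by auto
  have K2: "norm (J *v x) \<le> norm x * K2" for x
    using K2'[of x] mult_left_mono[of K2' K2 "norm x"] unfolding K2_def by auto
  show ?thesis
  proof (intro exI[of _ "K1 + K2"] conjI allI)
    show "0 \<le> K1 + K2" using K1p K2p by simp
    fix x y :: "real^'n"
    have "tln_field J D b x - tln_field J D b y = - (D *v (x - y)) + (relu_vec (J *v x + b) - relu_vec (J *v y + b))"
      by (simp add: tln_field_def matrix_vector_mult_diff_distrib algebra_simps)
    also have "norm \<dots> \<le> norm (D *v (x - y)) + norm (relu_vec (J *v x + b) - relu_vec (J *v y + b))"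
      by (metis norm_minus_cancel norm_triangle_ineq)
    also have "\<dots> \<le> norm (x - y) * K1 + norm (J *v (x - y))"
      using K1[of "x - y"] relu_lip[of "J *v x + b" "J *v y + b"]
      by (simp add: matrix_vector_mult_diff_distrib)
    also have "\<dots> \<le> norm (x - y) * K1 + norm (x - y) * K2"
      using K2[of "x - y"] by simp
    finally show "norm (tln_field J D b x - tln_field J D b y) \<le> (K1 + K2) * norm (x - y)"
      by (simp add: algebra_simps)
  qed
qed


lemma Jlin: "(J *v (xs + s *\<^sub>R v))$i = (J *v xs)$i + s * (J *v v)$i"
  by (simp add: matrix_vector_mult_def sum.distrib sum_distrib_left algebra_simps)

lemma unstable_engine:
  fixes J D :: "real^'n::finite^'n"
  assumes Dd: "\<forall>i j. i \<noteq> j \<longrightarrow> D$i$j = 0" "\<forall>i. 0 < D$i$i"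
    and fp: "tln_fixed_point J D b xs" and supp: "supp_vec xs = \<sigma>"
    and v: "v \<noteq> 0" "\<forall>i. i \<notin> \<sigma> \<longrightarrow> v$i = 0"
    and lam: "0 < lam" "\<forall>i\<in>\<sigma>. (J *v v)$i - D$i$i * v$i = lam * v$i"
    and off: "\<forall>i. i \<notin> \<sigma> \<longrightarrow> (J *v v)$i \<le> 0"
  shows "\<not> tln_stable_fp J D b xs"
proof
  assume st: "tln_stable_fp J D b xs"
  have Dm: "(D *v x)$i = D$i$i * x$i" for x i by (rule Dmul[OF Dd(1)])
  have nn: "\<forall>i. 0 \<le> xs$i" and f0: "tln_field J D b xs = 0"
    using fp unfolding tln_fixed_point_def nonneg_vec_def by auto
  have f0i: "- (D$i$i * xs$i) + max ((J *v xs + b)$i) 0 = 0" for i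
    using arg_cong[OF f0, of "\<lambda>z. z$i"] unfolding tln_field_def relu_vec_def by (simp add: Dm)
  have in\<sigma>: "0 < xs$i" if "i \<in> \<sigma>" for i using that supp unfolding supp_vec_def by auto
  have out\<sigma>: "xs$i = 0" if "i \<notin> \<sigma>" for i using that supp nn unfolding supp_vec_def
    by (metis less_eq_real_def mem_Collect_eq)
  have uin: "(J *v xs + b)$i = D$i$i * xs$i" if "i \<in> \<sigma>" for i
  proof -
    have "0 < D$i$i * xs$i" using Dd(2) in\<sigma>[OF that] by simp
    then show ?thesis using f0i[of i] by (simp add: max_def split: if_splits)
  qed
  have uout: "(J *v xs + b)$i \<le> 0" if "i \<notin> \<sigma>" for i
    using f0i[of i] out\<sigma>[OF that] by (simp add: max_def split: if_splits)
  have "\<exists>i. v$i \<noteq> 0" using v(1) by (metis vec_eq_iff zero_index)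
  then have sne: "\<sigma> \<noteq> {}" using v(2) by auto
  define m1 where "m1 = Min ((\<lambda>i. min (D$i$i * xs$i) (xs$i)) ` \<sigma>)"
  have m1: "0 < m1" "\<forall>i\<in>\<sigma>. m1 \<le> D$i$i * xs$i" "\<forall>i\<in>\<sigma>. m1 \<le> xs$i"
  proof -
    show "0 < m1" unfolding m1_def using sne in\<sigma> Dd(2) by (auto simp: Min_gr_iff)
    have "m1 \<le> min (D$i$i * xs$i) (xs$i)" if "i \<in> \<sigma>" for i
      unfolding m1_def using that by (intro Min_le) auto
    then show "\<forall>i\<in>\<sigma>. m1 \<le> D$i$i * xs$i" "\<forall>i\<in>\<sigma>. m1 \<le> xs$i" by auto
  qed
  define Vn where "Vn = 1 + (\<Sum>i\<in>UNIV. \<bar>(J *v v)$i\<bar>) + (\<Sum>i\<in>UNIV. \<bar>v$i\<bar>)"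
  have Vn: "1 \<le> Vn" unfolding Vn_def by (auto intro!: add_nonneg_nonneg sum_nonneg)
  have Vn1: "\<bar>(J *v v)$i\<bar> \<le> Vn" "\<bar>v$i\<bar> \<le> Vn" for i
  proof -
    have a: "\<bar>(J *v v)$i\<bar> \<le> (\<Sum>i\<in>UNIV. \<bar>(J *v v)$i\<bar>)" by (rule member_le_sum) auto
    have b: "\<bar>v$i\<bar> \<le> (\<Sum>i\<in>UNIV. \<bar>v$i\<bar>)" by (rule member_le_sum) auto
    have c: "0 \<le> (\<Sum>i\<in>UNIV. \<bar>(J *v v)$i\<bar>)" "0 \<le> (\<Sum>i\<in>UNIV. \<bar>v$i\<bar>)" by (auto intro: sum_nonneg)
    show "\<bar>(J *v v)$i\<bar> \<le> Vn" using a c unfolding Vn_def by linarith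
    show "\<bar>v$i\<bar> \<le> Vn" using b c unfolding Vn_def by linarith
  qed
  define s0 where "s0 = m1 / Vn"
  have s0: "0 < s0" unfolding s0_def using m1 Vn by simp
  have small: "s * \<bar>a\<bar> < m1" if "0 \<le> s" "s < s0" "\<bar>a\<bar> \<le> Vn" for s a
  proof -
    have "s * \<bar>a\<bar> \<le> s * Vn" using that by (intro mult_left_mono) auto
    also have "\<dots> < s0 * Vn" using that Vn by (intro mult_strict_right_mono) auto
    also have "\<dots> = m1" unfolding s0_def using Vn by simp
    finally show ?thesis .
  qed
  have ray: "tln_field J D b (xs + s *\<^sub>R v) = (s * lam) *\<^sub>R v" "nonneg_vec (xs + s *\<^sub>R v)"
    if s: "0 \<le> s" "s < s0" for s
  proof -
    have comp: "tln_field J D b (xs + s *\<^sub>R v) $ i = ((s * lam) *\<^sub>R v) $ i \<and> 0 \<le> (xs + s *\<^sub>R v)$i" for i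
    proof (cases "i \<in> \<sigma>")
      case True
      have u: "(J *v (xs + s *\<^sub>R v) + b)$i = D$i$i * xs$i + s * (J *v v)$i"
        using uin[OF True] by (simp add: Jlin algebra_simps)
      have "s * \<bar>(J *v v)$i\<bar> < m1" by (rule small[OF s Vn1(1)])
      then have "0 < D$i$i * xs$i + s * (J *v v)$i"
        using m1(2) True s(1) by (smt (verit) abs_mult abs_of_nonneg abs_le_iff)
      then have "tln_field J D b (xs + s *\<^sub>R v) $ i = - (D$i$i * (xs$i + s * v$i)) + (D$i$i * xs$i + s * (J *v v)$i)"
        unfolding tln_field_def relu_vec_def using u by (simp add: Dm)
      also have "\<dots> = s * ((J *v v)$i - D$i$i * v$i)" by (simp add: algebra_simps)
      also have "\<dots> = ((s * lam) *\<^sub>R v) $ i" using lam(2) True by simp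
      finally have A: "tln_field J D b (xs + s *\<^sub>R v) $ i = ((s * lam) *\<^sub>R v) $ i" .
      have "s * \<bar>v$i\<bar> < m1" by (rule small[OF s Vn1(2)])
      then have "0 \<le> xs$i + s * v$i"
        using m1(3) True s(1) by (smt (verit) abs_mult abs_of_nonneg abs_le_iff)
      then show ?thesis using A by simp
    next
      case False
      have u: "(J *v (xs + s *\<^sub>R v) + b)$i \<le> 0"
        using uout[OF False] off False s(1) by (simp add: Jlin algebra_simps) (smt (verit) mult_nonneg_nonpos)
      then show ?thesis
        using False v(2) out\<sigma>[OF False] unfolding tln_field_def relu_vec_def by (simp add: Dm)
    qed
    show "tln_field J D b (xs + s *\<^sub>R v) = (s * lam) *\<^sub>R v" using comp by (simp add: vec_eq_iff)
    show "nonneg_vec (xs + s *\<^sub>R v)" using comp unfolding nonneg_vec_def by blast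
  qed
  have nv: "0 < norm v" using v(1) by simp
  define s1 where "s1 = s0 / 2"
  have s1: "0 < s1" "s1 < s0" unfolding s1_def using s0 by auto
  define e where "e = s1 * norm v"
  have e: "0 < e" unfolding e_def using s1 nv by simp
  obtain d where d: "0 < d" and dd: "\<And>x0 x. nonneg_vec x0 \<and> dist x0 xs < d \<and> tln_solution J D b x0 x \<Longrightarrow> (\<forall>t\<ge>0. dist (x t) xs < e)"
    using st e unfolding tln_stable_fp_def by blast
  define \<delta> where "\<delta> = min (s1/2) (d / (2 * norm v))"
  have \<delta>: "0 < \<delta>" "\<delta> < s1" "\<delta> * norm v < d" unfolding \<delta>_def using s1 d nv
    by (auto simp: min_def field_simps)
  define T where "T = ln (s1 / \<delta>) / lam"
  have T: "0 \<le> T" unfolding T_def using \<delta> lam by (auto intro!: divide_nonneg_pos ln_ge_zero)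
  have eT: "\<delta> * exp (lam * T) = s1" unfolding T_def using \<delta> s1 lam by simp
  define x1 where "x1 t = xs + (\<delta> * exp (lam * t)) *\<^sub>R v" for t
  have amp: "\<delta> * exp (lam * t) \<le> s1" if "t \<le> T" for t
  proof -
    have "exp (lam * t) \<le> exp (lam * T)" using that lam by simp
    then show ?thesis using eT \<delta> by (metis mult_left_mono less_imp_le)
  qed
  have d1: "(x1 has_vector_derivative tln_field J D b (x1 t)) (at t within {0..T})" if "t \<in> {0..T}" for t
  proof -
    have "(x1 has_vector_derivative (\<delta> * (exp (lam * t) * lam)) *\<^sub>R v) (at t within {0..T})"
      unfolding x1_def by (auto intro!: derivative_eq_intros)
    moreover have "tln_field J D b (x1 t) = (\<delta> * (exp (lam * t) * lam)) *\<^sub>R v"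
    proof -
      have "0 \<le> \<delta> * exp (lam * t)" using \<delta> by simp
      moreover have "\<delta> * exp (lam * t) < s0" using amp[of t] that s1 by auto
      ultimately show ?thesis unfolding x1_def using ray(1) by (simp add: algebra_simps)
    qed
    ultimately show ?thesis by simp
  qed
  obtain L where L: "0 \<le> L" "\<forall>x y. norm (tln_field J D b x - tln_field J D b y) \<le> L * norm (x - y)"
    using tln_lip by blast
  obtain y where y0: "y 0 = x1 T" and dy: "\<forall>t\<ge>0. (y has_vector_derivative tln_field J D b (y t)) (at t within {0..})"
    using ode_exists[OF L(2) L(1), of "x1 T"] by blast
  define x where "x t = (if t \<le> T then x1 t else y (t - T))" for t
  have sol: "\<forall>t\<ge>0. (x has_vector_derivative tln_field J D b (x t)) (at t within {0..})"
    unfolding x_def by (rule glue[where T=T and ?x1.0=x1 and F="tln_field J D b" and y=y, OF T d1 y0]) (use dy in auto)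
  have x0: "x 0 = xs + \<delta> *\<^sub>R v" unfolding x_def x1_def using T by simp
  have "nonneg_vec (xs + \<delta> *\<^sub>R v)" using ray(2)[of \<delta>] \<delta> s1 by simp
  moreover have "dist (xs + \<delta> *\<^sub>R v) xs < d" using \<delta> by (simp add: dist_norm)
  moreover have "tln_solution J D b (xs + \<delta> *\<^sub>R v) x" unfolding tln_solution_def using x0 sol by simp
  ultimately have "\<forall>t\<ge>0. dist (x t) xs < e" using dd by blast
  then have "dist (x T) xs < e" using T by simp
  moreover have "x T = xs + s1 *\<^sub>R v" unfolding x_def x1_def using eT by simp
  ultimately show False using s1 unfolding e_def by (simp add: dist_norm)
qed


lemma nonisolated_engine:
  fixes J D :: "real^'n::finite^'n"
  assumes Dd: "\<forall>i j. i \<noteq> j \<longrightarrow> D$i$j = 0" "\<forall>i. 0 < D$i$i"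
    and fp: "tln_fixed_point J D b xs" and supp: "supp_vec xs = \<tau>"
    and u: "u \<noteq> 0" "\<forall>i. i \<notin> \<tau> \<longrightarrow> u$i = 0" "\<forall>i. (J *v u)$i = D$i$i * u$i"
  shows "\<not> tln_asymp_stable_fp J D b xs"
proof
  assume st: "tln_asymp_stable_fp J D b xs"
  then obtain d where d: "0 < d" and att: "\<And>x0 x. nonneg_vec x0 \<and> dist x0 xs < d \<and> tln_solution J D b x0 x \<Longrightarrow> (x \<longlongrightarrow> xs) at_top"
    unfolding tln_asymp_stable_fp_def by blast
  have Dm: "(D *v x)$i = D$i$i * x$i" for x i by (rule Dmul[OF Dd(1)])
  have nn: "\<forall>i. 0 \<le> xs$i" and f0: "tln_field J D b xs = 0"
    using fp unfolding tln_fixed_point_def nonneg_vec_def by auto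
  have f0i: "- (D$i$i * xs$i) + max ((J *v xs + b)$i) 0 = 0" for i
    using arg_cong[OF f0, of "\<lambda>z. z$i"] unfolding tln_field_def relu_vec_def by (simp add: Dm)
  have in\<tau>: "0 < xs$i" if "i \<in> \<tau>" for i using that supp unfolding supp_vec_def by auto
  have out\<tau>: "xs$i = 0" if "i \<notin> \<tau>" for i using that supp nn unfolding supp_vec_def
    by (metis less_eq_real_def mem_Collect_eq)
  have uin: "(J *v xs + b)$i = D$i$i * xs$i" if "i \<in> \<tau>" for i
  proof -
    have "0 < D$i$i * xs$i" using Dd(2) in\<tau>[OF that] by simp
    then show ?thesis using f0i[of i] by (simp add: max_def split: if_splits)
  qed
  have uout: "(J *v xs + b)$i \<le> 0" if "i \<notin> \<tau>" for i
    using f0i[of i] out\<tau>[OF that] by (simp add: max_def split: if_splits)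
  have "\<exists>i. u$i \<noteq> 0" using u(1) by (metis vec_eq_iff zero_index)
  then have tne: "\<tau> \<noteq> {}" using u(2) by auto
  define m1 where "m1 = Min ((\<lambda>i. xs$i) ` \<tau>)"
  have m1: "0 < m1" "\<forall>i\<in>\<tau>. m1 \<le> xs$i"
  proof -
    show "0 < m1" unfolding m1_def using tne in\<tau> by (auto simp: Min_gr_iff)
    show "\<forall>i\<in>\<tau>. m1 \<le> xs$i" unfolding m1_def by (auto intro: Min_le)
  qed
  have nu: "0 < norm u" using u(1) by simp
  define s where "s = min (m1 / (2 * norm u)) (d / (2 * norm u))"
  have s: "0 < s" "s * norm u < d" "s * norm u < m1" unfolding s_def using m1 d nu
    by (auto simp: min_def field_simps)
  define z where "z = xs + s *\<^sub>R u"
  have zc: "tln_field J D b z $ i = 0 \<and> 0 \<le> z$i" for i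
  proof (cases "i \<in> \<tau>")
    case True
    have "\<bar>u$i\<bar> \<le> norm u" by (rule component_le_norm_cart)
    then have "s * \<bar>u$i\<bar> \<le> s * norm u" using s by (intro mult_left_mono) auto
    moreover have "m1 \<le> xs$i" using m1 True by auto
    ultimately have "s * \<bar>u$i\<bar> < xs$i" using s(3) by linarith
    moreover have "s * (- \<bar>u$i\<bar>) \<le> s * u$i" using s by (intro mult_left_mono) auto
    ultimately have pos: "0 < xs$i + s * u$i" by linarith
    have "(J *v z + b)$i = D$i$i * (xs$i + s * u$i)"
      unfolding z_def using uin[OF True] u(3) by (simp add: Jlin algebra_simps)
    moreover have "0 < D$i$i * (xs$i + s * u$i)" using pos Dd(2) by simp
    ultimately show ?thesis unfolding tln_field_def relu_vec_def z_def using pos by (simp add: Dm)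
  next
    case False
    have "(J *v z + b)$i \<le> 0"
      unfolding z_def using uout[OF False] u(3) u(2) False by (simp add: Jlin algebra_simps)
    then show ?thesis unfolding tln_field_def relu_vec_def using False u(2) out\<tau>[OF False]
      by (simp add: Dm z_def)
  qed
  have fz: "tln_field J D b z = 0" using zc by (simp add: vec_eq_iff)
  have sol: "tln_solution J D b z (\<lambda>t::real. z)" unfolding tln_solution_def using fz by (auto intro: derivative_eq_intros)
  have "nonneg_vec z" using zc unfolding nonneg_vec_def by blast
  moreover have "dist z xs < d" using s unfolding z_def by (simp add: dist_norm)
  ultimately have "((\<lambda>t::real. z) \<longlongrightarrow> xs) at_top" using sol by (intro att[of z "\<lambda>t. z"] conjI)
  then have "xs = z" by (rule tendsto_unique[OF trivial_limit_at_top_linorder _ tendsto_const])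
  then show False using s u(1) unfolding z_def by simp
qed

lemma key_ineq:
  fixes p a r Rq :: real
  assumes p: "1 \<le> p" and cs: "r^2 \<le> (p-1)*Rq" and Rq: "0 \<le> Rq"
  shows "(p*a - r)^2 \<le> (p^2+p-1)*(a^2+Rq)"
proof (cases "p = 1")
  case True
  then have "r^2 \<le> 0" using cs by simp
  then have "r = 0" by simp
  then show ?thesis using True Rq by simp
next
  case False
  then have p1: "0 < p - 1" using p by simp
  have c0: "0 \<le> p^2+p-1" using p by (smt (verit) one_le_power)
  have id: "(p^2+p-1)*((p-1)*a^2) + (p^2+p-1)*r^2 - (p-1)*(p*a-r)^2 = ((p-1)*a+p*r)^2"
    by (simp add: power2_eq_square algebra_simps)
  have "(p^2+p-1)*r^2 \<le> (p^2+p-1)*((p-1)*Rq)" using cs c0 by (rule mult_left_mono)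
  then have "0 \<le> (p^2+p-1)*((p-1)*a^2) + (p^2+p-1)*((p-1)*Rq) - (p-1)*(p*a-r)^2"
    using id by (smt (verit) zero_le_power2)
  also have "\<dots> = (p-1) * ((p^2+p-1)*(a^2+Rq) - (p*a - r)^2)" by (simp add: algebra_simps)
  finally have "0 \<le> (p^2+p-1)*(a^2+Rq) - (p*a - r)^2" using p1 by (simp add: zero_le_mult_iff)
  then show ?thesis by simp
qed

lemma double_sum_sq: "(\<Sum>i\<in>A. \<Sum>j\<in>A. f i * f j) = (\<Sum>i\<in>A. f i)^2" for f :: "'a \<Rightarrow> real"
  by (simp only: power2_eq_square sum_product)

lemma double_sum_delta:
  fixes y :: "'a \<Rightarrow> real"
  assumes "finite A"
  shows "(\<Sum>i\<in>A. \<Sum>j\<in>A. y i * (if j = i then c else 0) * y j) = c * (\<Sum>i\<in>A. (y i)^2)"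
proof -
  have "(\<Sum>j\<in>A. y i * (if j = i then c else 0) * y j) = c * (y i)^2" if "i \<in> A" for i
  proof -
    have "(\<Sum>j\<in>A. y i * (if j = i then c else 0) * y j) = (\<Sum>j\<in>A. if j = i then c * (y i)^2 else 0)"
      by (intro sum.cong refl) (auto simp: power2_eq_square)
    also have "\<dots> = c * (y i)^2" using assms that by simp
    finally show ?thesis .
  qed
  then have "(\<Sum>i\<in>A. \<Sum>j\<in>A. y i * (if j = i then c else 0) * y j) = (\<Sum>i\<in>A. c * (y i)^2)"
    by (intro sum.cong refl)
  then show ?thesis by (simp add: sum_distrib_left)
qed

lemma q_stable:
  fixes y :: "'n \<Rightarrow> real"
  assumes "finite A" "0 \<le> eps"
  shows "(\<Sum>i\<in>A. \<Sum>j\<in>A. y i * (-1 + (if j = i then -eps else 0)) * y j) \<le> -eps * (\<Sum>i\<in>A. (y i)^2)"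
proof -
  have "(\<Sum>i\<in>A. \<Sum>j\<in>A. y i * (-1 + (if j = i then -eps else 0)) * y j)
      = - (\<Sum>i\<in>A. \<Sum>j\<in>A. y i * y j) + (\<Sum>i\<in>A. \<Sum>j\<in>A. y i * (if j = i then -eps else 0) * y j)"
  proof -
    have "(\<Sum>i\<in>A. \<Sum>j\<in>A. y i * (-1 + (if j = i then -eps else 0)) * y j)
      = (\<Sum>i\<in>A. \<Sum>j\<in>A. - (y i * y j) + y i * (if j = i then -eps else 0) * y j)"
      by (intro sum.cong refl) (simp add: algebra_simps)
    then show ?thesis by (simp only: sum.distrib sum_negf)
  qed
  also have "\<dots> = - ((sum y A)^2) + (-eps) * (\<Sum>i\<in>A. (y i)^2)"
    by (simp only: double_sum_sq double_sum_delta[OF assms(1)])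
  also have "\<dots> \<le> -eps * (\<Sum>i\<in>A. (y i)^2)" by simp
  finally show ?thesis .
qed


lemma q_unstable:
  fixes y w :: "'a \<Rightarrow> real" and p eps beta :: real
  assumes fin: "finite \<sigma>" and ts: "\<tau> \<subseteq> \<sigma>" "\<tau> \<noteq> \<sigma>" and i0: "i0 \<in> \<sigma>"
    and card: "real (card \<sigma>) = p + 1" and p: "1 \<le> p"
    and w: "w i0 = p" "\<forall>i\<in>\<sigma>. i \<noteq> i0 \<longrightarrow> w i = -1"
    and beta: "beta * (p^2 + p - 1/2) = 1" "0 < beta"
    and eps: "0 < eps" "eps \<le> 1"
  shows "(\<Sum>i\<in>\<tau>. \<Sum>j\<in>\<tau>. y i * (-1 + eps * (beta * w i * w j - (if i = j then 1 else 0))) * y j)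
         \<le> - (eps * beta / 2) * (\<Sum>i\<in>\<tau>. (y i)^2)"
proof -
  have finT: "finite \<tau>" using fin ts finite_subset by blast
  define S where "S = sum y \<tau>"
  define Sw where "Sw = (\<Sum>i\<in>\<tau>. w i * y i)"
  define S2 where "S2 = (\<Sum>i\<in>\<tau>. (y i)^2)"
  have S2: "0 \<le> S2" unfolding S2_def by (auto intro: sum_nonneg)
  have "(\<Sum>i\<in>\<tau>. \<Sum>j\<in>\<tau>. y i * (-1 + eps * (beta * w i * w j - (if i = j then 1 else 0))) * y j)
     = (\<Sum>i\<in>\<tau>. \<Sum>j\<in>\<tau>. - (y i * y j) + (eps*beta) * ((w i * y i) * (w j * y j)) + y i * (if j = i then -eps else 0) * y j)"
    by (intro sum.cong refl) (auto simp: algebra_simps)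
  also have "\<dots> = - (\<Sum>i\<in>\<tau>. \<Sum>j\<in>\<tau>. y i * y j) + (eps*beta) * (\<Sum>i\<in>\<tau>. \<Sum>j\<in>\<tau>. (w i * y i) * (w j * y j))
      + (\<Sum>i\<in>\<tau>. \<Sum>j\<in>\<tau>. y i * (if j = i then -eps else 0) * y j)"
    by (simp only: sum.distrib sum_negf sum_distrib_left)
  also have "\<dots> = - (S^2) + (eps*beta) * Sw^2 + (-eps) * S2"
    unfolding S_def Sw_def S2_def
    by (simp only: double_sum_sq[of y] double_sum_sq[of "\<lambda>i. w i * y i"] double_sum_delta[OF finT])
  finally have E: "(\<Sum>i\<in>\<tau>. \<Sum>j\<in>\<tau>. y i * (-1 + eps * (beta * w i * w j - (if i = j then 1 else 0))) * y j)
     = - (S^2) + (eps*beta) * Sw^2 + (-eps) * S2" .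
  have bl1: "beta \<le> 1"
  proof -
    have "1 \<le> p^2" using p by (rule one_le_power)
    then have "1 \<le> p^2 + p - 1/2" using p by linarith
    then have "beta * 1 \<le> beta * (p^2 + p - 1/2)" using beta(2) by (intro mult_left_mono) auto
    then show ?thesis using beta(1) by simp
  qed
  have eb: "eps * beta \<le> 1" using eps bl1 beta(2) by (metis mult_le_one less_imp_le)
  show ?thesis
  proof (cases "i0 \<in> \<tau>")
    case False
    have "(\<Sum>i\<in>\<tau>. w i * y i) = (\<Sum>i\<in>\<tau>. - y i)"
    proof (rule sum.cong[OF refl])
      fix i assume "i \<in> \<tau>"
      then have "w i = -1" using False ts w(2) by auto
      then show "w i * y i = - y i" by simp
    qed
    then have "Sw = - S" unfolding Sw_def S_def by (simp add: sum_negf)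
    then have "(eps*beta) * Sw^2 \<le> S^2" using mult_right_mono[OF eb zero_le_power2[of S]] by simp
    moreover have "-eps * S2 \<le> - (eps * beta / 2) * S2"
    proof -
      have "eps * beta / 2 \<le> eps" using eps bl1 beta(2) by (simp add: mult_le_cancel_left1)
      then show ?thesis using S2 by (intro mult_right_mono) auto
    qed
    ultimately show ?thesis unfolding E S2_def by linarith
  next
    case True
    define R where "R = \<tau> - {i0}"
    define a where "a = y i0"
    define r where "r = sum y R"
    define Rq where "Rq = (\<Sum>i\<in>R. (y i)^2)"
    have finR: "finite R" unfolding R_def using finT by simp
    have Rq: "0 \<le> Rq" unfolding Rq_def by (auto intro: sum_nonneg)
    have Sw: "Sw = p * a - r"
    proof -
      have "Sw = w i0 * y i0 + (\<Sum>i\<in>R. w i * y i)"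
        unfolding Sw_def R_def using True finT by (simp add: sum.remove)
      also have "(\<Sum>i\<in>R. w i * y i) = - r"
      proof -
        have "(\<Sum>i\<in>R. w i * y i) = (\<Sum>i\<in>R. - y i)"
        proof (rule sum.cong[OF refl])
          fix i assume "i \<in> R"
          then have "w i = -1" using ts w(2) unfolding R_def by auto
          then show "w i * y i = - y i" by simp
        qed
        then show ?thesis unfolding r_def by (simp add: sum_negf)
      qed
      finally show ?thesis using w(1) unfolding a_def by simp
    qed
    have S2': "S2 = a^2 + Rq"
      unfolding S2_def Rq_def a_def R_def using True finT by (simp add: sum.remove)
    have cardR: "real (card R) \<le> p - 1"
    proof -
      have "card \<tau> < card \<sigma>" using ts fin by (intro psubset_card_mono) auto
      moreover have "card R = card \<tau> - 1" unfolding R_def using True finT by simp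
      moreover have "0 < card \<tau>" using True finT card_gt_0_iff by blast
      ultimately have "card R + 2 \<le> card \<sigma>" by linarith
      then have "real (card R) + 2 \<le> real (card \<sigma>)" by linarith
      then show ?thesis using card by linarith
    qed
    have cs: "r^2 \<le> (p-1) * Rq"
    proof -
      have "r^2 \<le> Rq * real (card R)" unfolding r_def Rq_def by (rule sum_squared_le_sum_of_squares)
      also have "\<dots> \<le> Rq * (p-1)" using cardR Rq by (intro mult_left_mono) auto
      finally show ?thesis by (simp add: mult.commute)
    qed
    have ki: "(p*a - r)^2 \<le> (p^2+p-1)*(a^2+Rq)" by (rule key_ineq[OF p cs Rq])
    have bk: "beta * (p^2+p-1) = 1 - beta/2" using beta(1) by (simp add: algebra_simps)
    have "beta * Sw^2 \<le> beta * ((p^2+p-1)*(a^2+Rq))" unfolding Sw using ki beta(2) by (intro mult_left_mono) auto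
    also have "\<dots> = (1 - beta/2) * S2" unfolding S2' using bk by (simp add: mult.assoc[symmetric])
    finally have bs: "beta * Sw^2 \<le> (1 - beta/2) * S2" .
    have "(eps*beta) * Sw^2 \<le> eps * ((1 - beta/2) * S2)"
      using mult_left_mono[OF bs, of eps] eps by (simp add: mult.assoc)
    moreover have "0 \<le> S^2" by simp
    ultimately have "- (S^2) + (eps*beta) * Sw^2 + (-eps) * S2 \<le> eps * ((1 - beta/2) * S2) + (-eps) * S2" by linarith
    also have "\<dots> = - (eps * beta / 2) * S2" by (simp add: algebra_simps)
    finally show ?thesis unfolding E S2_def .
  qed
qed

lemma mv_W:
  fixes J D A :: "real^'n::finite^'n"
  assumes Dd: "\<forall>i j. i \<noteq> j \<longrightarrow> D$i$j = 0" and W: "\<forall>i j. J$i$j = D$i$j - 1 + A$i$j"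
  shows "(J *v x)$i = D$i$i * x$i - (\<Sum>j\<in>UNIV. x$j) + (\<Sum>j\<in>UNIV. A$i$j * x$j)"
proof -
  have "(J *v x)$i = (\<Sum>j\<in>UNIV. J$i$j * x$j)" by (simp add: matrix_vector_mult_def)
  also have "\<dots> = (\<Sum>j\<in>UNIV. D$i$j * x$j - x$j + A$i$j * x$j)"
    by (intro sum.cong refl, subst W[rule_format]) (simp add: algebra_simps)
  also have "\<dots> = (D *v x)$i - (\<Sum>j\<in>UNIV. x$j) + (\<Sum>j\<in>UNIV. A$i$j * x$j)"
    by (simp add: sum.distrib sum_subtractf matrix_vector_mult_def)
  also have "(D *v x)$i = D$i$i * x$i" by (rule Dmul[OF Dd])
  finally show ?thesis .
qed

lemma flex_stable:
  fixes J D :: "real^'n::finite^'n"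
  assumes Dd: "\<forall>i j. i \<noteq> j \<longrightarrow> D$i$j = 0" "\<forall>i. 0 < D$i$i"
    and W: "\<forall>i j. J$i$j - D$i$j = -1" and i0: "i0 \<in> \<sigma>" and e: "0 < e"
  shows "\<exists>As. eps_perturbation e As \<and> maximally_stable_clique (J + As) D \<sigma>"
proof -
  define As :: "real^'n^'n" where "As = (\<chi> i j. if (i \<in> \<sigma> \<and> j = i) \<or> (i = i0 \<and> j \<notin> \<sigma>) then -e else 0)"
  have ep: "eps_perturbation e As" unfolding eps_perturbation_def As_def using e by auto
  have W': "\<forall>i j. (J + As)$i$j = D$i$j - 1 + As$i$j" using W by (auto simp: algebra_simps)
  have st: "stable_set (J + As) D \<sigma>"
  proof (rule stable_set_engine[OF Dd _ e])
    show "\<sigma> \<noteq> {}" using i0 by auto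
    show "\<forall>y::'n\<Rightarrow>real. (\<Sum>i\<in>\<sigma>. \<Sum>j\<in>\<sigma>. y i * ((J + As)$i$j - D$i$j) * y j) \<le> -e * (\<Sum>i\<in>\<sigma>. (y i)^2)"
    proof
      fix y :: "'n \<Rightarrow> real"
      have "(\<Sum>i\<in>\<sigma>. \<Sum>j\<in>\<sigma>. y i * ((J + As)$i$j - D$i$j) * y j)
          = (\<Sum>i\<in>\<sigma>. \<Sum>j\<in>\<sigma>. y i * (-1 + (if j = i then -e else 0)) * y j)"
        using W' by (intro sum.cong refl) (auto simp: As_def)
      also have "\<dots> \<le> -e * (\<Sum>i\<in>\<sigma>. (y i)^2)" using e by (intro q_stable) auto
      finally show "(\<Sum>i\<in>\<sigma>. \<Sum>j\<in>\<sigma>. y i * ((J + As)$i$j - D$i$j) * y j) \<le> -e * (\<Sum>i\<in>\<sigma>. (y i)^2)" .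
    qed
  qed
  have nost: "\<not> stable_set (J + As) D \<tau>" if sub: "\<sigma> \<subset> \<tau>" for \<tau>
  proof
    assume "stable_set (J + As) D \<tau>"
    then obtain b xs where asy: "tln_asymp_stable_fp (J + As) D b xs" and sx: "supp_vec xs = \<tau>"
      unfolding stable_set_def by blast
    obtain j where j: "j \<in> \<tau>" "j \<notin> \<sigma>" using sub by blast
    have ji0: "j \<noteq> i0" using j i0 by auto
    define u :: "real^'n" where "u = axis j 1 - axis i0 1"
    have ui: "u$i = (if i = j then 1 else 0) - (if i = i0 then 1 else 0)" for i
      unfolding u_def by (simp add: axis_def)
    have "\<not> tln_asymp_stable_fp (J + As) D b xs"
    proof (rule nonisolated_engine[OF Dd _ sx])
      show "tln_fixed_point (J + As) D b xs" using asy unfolding tln_asymp_stable_fp_def tln_stable_fp_def by blast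
      show "u \<noteq> 0" using ui[of j] ji0 by (metis zero_index one_neq_zero diff_zero)
      show "\<forall>i. i \<notin> \<tau> \<longrightarrow> u$i = 0" using ui j i0 sub by auto
      show "\<forall>i. ((J + As) *v u)$i = D$i$i * u$i"
      proof
        fix i
        have "((J + As) *v u)$i = (J + As)$i$j - (J + As)$i$i0"
          unfolding u_def by (simp add: matrix_vector_mult_diff_distrib matrix_vector_mult_basis column_def)
        also have "\<dots> = D$i$j - D$i$i0" using W' j i0 by (auto simp: As_def)
        also have "\<dots> = D$i$i * u$i" using Dd(1) ui[of i] ji0 by (cases "i = j"; cases "i = i0") auto
        finally show "((J + As) *v u)$i = D$i$i * u$i" .
      qed
    qed
    then show False using asy by blast
  qed
  show ?thesis using ep st nost unfolding maximally_stable_clique_def by blast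
qed


lemma flex_unstable:
  fixes J D :: "real^'n::finite^'n"
  assumes Dd: "\<forall>i j. i \<noteq> j \<longrightarrow> D$i$j = 0" "\<forall>i. 0 < D$i$i"
    and W: "\<forall>i j. J$i$j - D$i$j = -1" and card: "2 \<le> card \<sigma>" and e: "0 < e"
  shows "\<exists>Au. eps_perturbation e Au \<and> minimally_unstable_clique (J + Au) D \<sigma>"
proof -
  have sne: "\<sigma> \<noteq> {}" using card by auto
  then obtain i0 where i0: "i0 \<in> \<sigma>" by blast
  have fin: "finite \<sigma>" by simp
  define p where "p = real (card \<sigma>) - 1"
  have p: "1 \<le> p" unfolding p_def using card by simp
  have cardp: "real (card \<sigma>) = p + 1" unfolding p_def by simp
  define beta where "beta = 1 / (p^2 + p - 1/2)"
  have pp: "1 \<le> p^2" using p by (rule one_le_power)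
  have den: "0 < p^2 + p - 1/2" using p pp by linarith
  have beta: "beta * (p^2 + p - 1/2) = 1" "0 < beta" unfolding beta_def using den by auto
  define eps where "eps = min e 1"
  have eps: "0 < eps" "eps \<le> 1" "eps \<le> e" unfolding eps_def using e by auto
  define w :: "real^'n" where "w = (\<chi> i. if i = i0 then p else if i \<in> \<sigma> then -1 else 0)"
  have wi: "w$i0 = p" "\<forall>i\<in>\<sigma>. i \<noteq> i0 \<longrightarrow> w$i = -1" "\<forall>i. i \<notin> \<sigma> \<longrightarrow> w$i = 0"
    unfolding w_def using i0 by auto
  define Au :: "real^'n^'n" where
    "Au = (\<chi> i j. if i \<in> \<sigma> \<and> j \<in> \<sigma> then eps * (beta * w$i * w$j - (if i = j then 1 else 0)) else 0)"
  have W': "\<forall>i j. (J + Au)$i$j = D$i$j - 1 + Au$i$j" using W by (auto simp: algebra_simps)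
  have bp2: "beta * p^2 \<le> 1"
  proof -
    have "beta * p^2 \<le> beta * (p^2 + p - 1/2)" using beta(2) p by (intro mult_left_mono) auto
    then show ?thesis using beta(1) by simp
  qed
  have wabs: "\<bar>w$i\<bar> \<le> p" for i unfolding w_def using p by auto
  have ep: "eps_perturbation e Au"
    unfolding eps_perturbation_def
  proof (intro allI)
    fix i j
    have b1: "\<bar>beta * w$i * w$j - (if i = j then 1 else 0)\<bar> \<le> 1"
    proof (cases "i = j")
      case True
      have "(w$i)^2 \<le> p^2" using power_mono[OF wabs[of i], of 2] by simp
      then have "beta * (w$i)^2 \<le> beta * p^2" using beta(2) by (intro mult_left_mono) auto
      moreover have "0 \<le> beta * (w$i)^2" using beta(2) by simp
      ultimately show ?thesis using True bp2 by (simp add: power2_eq_square mult.assoc abs_le_iff)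
    next
      case False
      have "\<bar>beta * w$i * w$j\<bar> = beta * (\<bar>w$i\<bar> * \<bar>w$j\<bar>)" using beta(2) by (simp add: abs_mult)
      also have "\<dots> \<le> beta * (p * p)"
        using beta(2) wabs[of i] wabs[of j] by (intro mult_left_mono mult_mono) auto
      also have "\<dots> \<le> 1" using bp2 by (simp add: power2_eq_square)
      finally show ?thesis using False by simp
    qed
    have "\<bar>Au$i$j\<bar> \<le> eps * 1"
    proof (cases "i \<in> \<sigma> \<and> j \<in> \<sigma>")
      case True
      then have "\<bar>Au$i$j\<bar> = eps * \<bar>beta * w$i * w$j - (if i = j then 1 else 0)\<bar>"
        unfolding Au_def using eps by (simp add: abs_mult)
      also have "\<dots> \<le> eps * 1" using b1 eps by (intro mult_left_mono) auto
      finally show ?thesis .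
    qed (use eps in \<open>auto simp: Au_def\<close>)
    then show "\<bar>Au$i$j\<bar> \<le> e" using eps by simp
  qed
  have sumw: "(\<Sum>j\<in>UNIV. w$j) = 0"
  proof -
    have "(\<Sum>j\<in>UNIV. w$j) = (\<Sum>j\<in>\<sigma>. w$j) + (\<Sum>j\<in>-\<sigma>. w$j)" by (rule split_sum)
    also have "(\<Sum>j\<in>-\<sigma>. w$j) = 0" using wi(3) by simp
    also have "(\<Sum>j\<in>\<sigma>. w$j) = w$i0 + (\<Sum>j\<in>\<sigma>-{i0}. w$j)" using i0 by (simp add: sum.remove)
    also have "(\<Sum>j\<in>\<sigma>-{i0}. w$j) = (\<Sum>j\<in>\<sigma>-{i0}. -1)" using wi(2) by (intro sum.cong) auto
    also have "\<dots> = - real (card \<sigma> - 1)" using i0 by simp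
    finally show ?thesis using wi(1) card unfolding p_def by (simp add: of_nat_diff)
  qed
  have sumw2: "(\<Sum>j\<in>\<sigma>. w$j * w$j) = p^2 + p"
  proof -
    have "(\<Sum>j\<in>\<sigma>. w$j * w$j) = w$i0 * w$i0 + (\<Sum>j\<in>\<sigma>-{i0}. w$j * w$j)" using i0 by (simp add: sum.remove)
    also have "(\<Sum>j\<in>\<sigma>-{i0}. w$j * w$j) = (\<Sum>j\<in>\<sigma>-{i0}. 1)" using wi(2) by (intro sum.cong) auto
    also have "\<dots> = real (card \<sigma> - 1)" using i0 by simp
    finally show ?thesis using wi(1) card unfolding p_def by (simp add: of_nat_diff power2_eq_square)
  qed
  have Auw: "(\<Sum>j\<in>UNIV. Au$i$j * w$j) = (if i \<in> \<sigma> then eps * beta / 2 * w$i else 0)" for i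
  proof (cases "i \<in> \<sigma>")
    case True
    have "(\<Sum>j\<in>UNIV. Au$i$j * w$j) = (\<Sum>j\<in>\<sigma>. Au$i$j * w$j) + (\<Sum>j\<in>-\<sigma>. Au$i$j * w$j)" by (rule split_sum)
    also have "(\<Sum>j\<in>-\<sigma>. Au$i$j * w$j) = 0" using wi(3) by simp
    also have "(\<Sum>j\<in>\<sigma>. Au$i$j * w$j) = (\<Sum>j\<in>\<sigma>. eps * beta * w$i * (w$j * w$j) - (if j = i then eps * w$i else 0))"
      using True by (intro sum.cong refl) (auto simp: Au_def algebra_simps)
    also have "\<dots> = eps * beta * w$i * (p^2 + p) - eps * w$i"
      using True by (simp add: sum_subtractf sum_distrib_left[symmetric] sumw2)
    also have "\<dots> = eps * w$i * (beta * (p^2 + p) - 1)" by (simp add: algebra_simps)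
    also have "beta * (p^2 + p) - 1 = beta / 2" using beta(1) by (simp add: algebra_simps)
    finally show ?thesis using True by simp
  next
    case False
    then show ?thesis by (simp add: Au_def)
  qed
  have Jw: "((J + Au) *v w)$i = D$i$i * w$i + (if i \<in> \<sigma> then eps * beta / 2 * w$i else 0)" for i
    using mv_W[OF Dd(1) W', of w i] sumw Auw[of i] by simp
  have uns: "\<not> tln_stable_fp (J + Au) D b xs" if "supp_vec xs = \<sigma>" "tln_fixed_point (J + Au) D b xs" for b xs
  proof (rule unstable_engine[OF Dd that(2) that(1)])
    show "w \<noteq> 0" using wi(1) p by (metis zero_index not_one_le_zero)
    show "\<forall>i. i \<notin> \<sigma> \<longrightarrow> w$i = 0" by (rule wi(3))
    show "0 < eps * beta / 2" using eps beta by simp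
    show "\<forall>i\<in>\<sigma>. ((J + Au) *v w)$i - D$i$i * w$i = eps * beta / 2 * w$i" using Jw by simp
    show "\<forall>i. i \<notin> \<sigma> \<longrightarrow> ((J + Au) *v w)$i \<le> 0" using Jw wi(3) by simp
  qed
  have unst: "unstable_set (J + Au) D \<sigma>"
    unfolding unstable_set_def marginal_set_def stable_set_def
    using uns sne unfolding tln_asymp_stable_fp_def tln_stable_fp_def by blast
  have sub: "\<not> unstable_set (J + Au) D \<tau>" if "\<tau> \<subset> \<sigma>" for \<tau>
  proof (cases "\<tau> = {}")
    case True
    then show ?thesis unfolding unstable_set_def by simp
  next
    case False
    have "stable_set (J + Au) D \<tau>"
    proof (rule stable_set_engine[OF Dd False])
      show "0 < eps * beta / 2" using eps beta by simp
      show "\<forall>y::'n\<Rightarrow>real. (\<Sum>i\<in>\<tau>. \<Sum>j\<in>\<tau>. y i * ((J + Au)$i$j - D$i$j) * y j) \<le> - (eps * beta / 2) * (\<Sum>i\<in>\<tau>. (y i)^2)"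
      proof
        fix y :: "'n \<Rightarrow> real"
        have "(\<Sum>i\<in>\<tau>. \<Sum>j\<in>\<tau>. y i * ((J + Au)$i$j - D$i$j) * y j)
           = (\<Sum>i\<in>\<tau>. \<Sum>j\<in>\<tau>. y i * (-1 + eps * (beta * (\<lambda>k. w$k) i * (\<lambda>k. w$k) j - (if i = j then 1 else 0))) * y j)"
          using W' that by (intro sum.cong refl) (auto simp: Au_def)
        also have "\<dots> \<le> - (eps * beta / 2) * (\<Sum>i\<in>\<tau>. (y i)^2)"
          by (rule q_unstable[OF fin _ _ i0 cardp p _ _ beta eps(1,2)]) (use that wi in auto)
        finally show "(\<Sum>i\<in>\<tau>. \<Sum>j\<in>\<tau>. y i * ((J + Au)$i$j - D$i$j) * y j) \<le> - (eps * beta / 2) * (\<Sum>i\<in>\<tau>. (y i)^2)" .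
      qed
    qed
    then show ?thesis unfolding unstable_set_def by simp
  qed
  show ?thesis using ep unst sub unfolding minimally_unstable_clique_def by blast
qed


lemma singleton_not_flex:
  fixes J D :: "real^'n::finite^'n"
  assumes Dd: "\<forall>i j. i \<noteq> j \<longrightarrow> D$i$j = 0" "\<forall>i. 0 < D$i$i"
    and W: "\<forall>i j. J$i$j - D$i$j = -1"
  shows "\<not> flexible_clique J D {k}"
proof
  assume "flexible_clique J D {k}"
  then obtain Au where ep: "eps_perturbation (1/2) Au" and mu: "minimally_unstable_clique (J + Au) D {k}"
    unfolding flexible_clique_def by (meson half_gt_zero zero_less_one)
  have "stable_set (J + Au) D {k}"
  proof (rule stable_set_engine[OF Dd])
    show "{k} \<noteq> {}" by simp
    show "(0::real) < 1/2" by simp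
    show "\<forall>y::'n\<Rightarrow>real. (\<Sum>i\<in>{k}. \<Sum>j\<in>{k}. y i * ((J + Au)$i$j - D$i$j) * y j) \<le> - (1/2) * (\<Sum>i\<in>{k}. (y i)^2)"
    proof
      fix y :: "'n \<Rightarrow> real"
      have a: "Au$k$k \<le> 1/2" using ep unfolding eps_perturbation_def by (meson abs_le_D1)
      have "(J + Au)$k$k - D$k$k = -1 + Au$k$k" using W by (simp add: algebra_simps)
      then have "(J + Au)$k$k - D$k$k \<le> - (1/2)" using a by linarith
      then have h: "((J + Au)$k$k - D$k$k) * (y k)^2 \<le> - (1/2) * (y k)^2"
        by (rule mult_right_mono[OF _ zero_le_power2])
      have gen: "\<And>a b::real. a * b * a = b * a^2" by (simp add: power2_eq_square mult_ac)
      have eq: "y k * ((J + Au)$k$k - D$k$k) * y k = ((J + Au)$k$k - D$k$k) * (y k)^2"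
        by (rule gen)
      have "y k * ((J + Au)$k$k - D$k$k) * y k \<le> - (1/2) * (y k)^2" unfolding eq by (rule h)
      then show "(\<Sum>i\<in>{k}. \<Sum>j\<in>{k}. y i * ((J + Au)$i$j - D$i$j) * y j) \<le> - (1/2) * (\<Sum>i\<in>{k}. (y i)^2)" by simp
    qed
  qed
  then show False using mu unfolding minimally_unstable_clique_def unstable_set_def by blast
qed

lemma empty_not_flex: "\<not> flexible_clique J D {}"
  unfolding flexible_clique_def maximally_stable_clique_def stable_set_def
  using zero_less_one by blast

lemma count_card2: "card {\<sigma>::'n::finite set. 2 \<le> card \<sigma>} = 2 ^ CARD('n) - CARD('n) - 1"
proof -
  define A2 where "A2 = {\<sigma>::'n set. 2 \<le> card \<sigma>}"
  define A1 where "A1 = {\<sigma>::'n set. card \<sigma> = 1}"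
  define A0 where "A0 = {\<sigma>::'n set. card \<sigma> = 0}"
  have U: "(UNIV :: 'n set set) = A2 \<union> (A1 \<union> A0)"
  proof (rule set_eqI)
    fix \<sigma> :: "'n set"
    have "card \<sigma> = 0 \<or> card \<sigma> = 1 \<or> 2 \<le> card \<sigma>" by arith
    then show "\<sigma> \<in> UNIV \<longleftrightarrow> \<sigma> \<in> A2 \<union> (A1 \<union> A0)" unfolding A2_def A1_def A0_def by blast
  qed
  have c1: "card A1 = CARD('n)"
    using n_subsets[of "UNIV::'n set" 1] unfolding A1_def by simp
  have c0: "card A0 = 1"
  proof -
    have "A0 = {{}}" unfolding A0_def by auto
    then show ?thesis by simp
  qed
  have "card (UNIV :: 'n set set) = card A2 + (card A1 + card A0)"
    unfolding U by (subst card_Un_disjoint, auto simp: A2_def A1_def A0_def card_Un_disjoint)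
  moreover have "card (UNIV :: 'n set set) = 2 ^ CARD('n)"
    using card_Pow[of "UNIV :: 'n set"] by simp
  ultimately show ?thesis unfolding A2_def[symmetric] using c1 c0 by simp
qed

theorem mainTheorem16:
  fixes J D :: "real^'n::finite^'n"
  assumes "tln_network J D"
    and "- D + J = (\<chi> i j. -1)"
  shows "(\<forall>\<sigma>::'n set. 2 \<le> card \<sigma> \<longrightarrow> flexible_clique J D \<sigma>)
         \<and> flex J D = 2 ^ CARD('n) - CARD('n) - 1"
proof -
  have Dd: "\<forall>i j. i \<noteq> j \<longrightarrow> D$i$j = 0" "\<forall>i. 0 < D$i$i"
    using assms(1) unfolding tln_network_def by auto
  have W: "\<forall>i j. J$i$j - D$i$j = -1"
  proof (intro allI)
    fix i j
    have "(- D + J)$i$j = -1" using assms(2) by simp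
    then show "J$i$j - D$i$j = -1" by simp
  qed
  have fl: "flexible_clique J D \<sigma>" if c2: "2 \<le> card \<sigma>" for \<sigma> :: "'n set"
    unfolding flexible_clique_def
  proof (intro allI impI)
    fix e :: real assume e: "0 < e"
    have "\<sigma> \<noteq> {}" using c2 by auto
    then obtain i0 where "i0 \<in> \<sigma>" by blast
    obtain As where "eps_perturbation e As \<and> maximally_stable_clique (J + As) D \<sigma>"
      using flex_stable[OF Dd W \<open>i0 \<in> \<sigma>\<close> e] by blast
    moreover obtain Au where "eps_perturbation e Au \<and> minimally_unstable_clique (J + Au) D \<sigma>"
      using flex_unstable[OF Dd W c2 e] by blast
    ultimately show "\<exists>As Au. eps_perturbation e As \<and> eps_perturbation e Au \<and>
       maximally_stable_clique (J + As) D \<sigma> \<and> minimally_unstable_clique (J + Au) D \<sigma>" by blast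
  qed
  have eq: "{\<sigma>. flexible_clique J D \<sigma>} = {\<sigma>::'n set. 2 \<le> card \<sigma>}"
  proof (intro set_eqI iffI)
    fix \<sigma> :: "'n set"
    assume "\<sigma> \<in> {\<sigma>. flexible_clique J D \<sigma>}"
    then have f: "flexible_clique J D \<sigma>" by simp
    show "\<sigma> \<in> {\<sigma>. 2 \<le> card \<sigma>}"
    proof (rule ccontr)
      assume "\<sigma> \<notin> {\<sigma>. 2 \<le> card \<sigma>}"
      then have "\<not> 2 \<le> card \<sigma>" by simp
      then have "card \<sigma> = 0 \<or> card \<sigma> = 1" by arith
      then show False
      proof
        assume "card \<sigma> = 0"
        then have "\<sigma> = {}" by simp
        then show False using f empty_not_flex by blast
      next
        assume "card \<sigma> = 1"
        then obtain k where "\<sigma> = {k}" by (auto simp: card_Suc_eq)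
        then show False using f singleton_not_flex[OF Dd W] by blast
      qed
    qed
  next
    fix \<sigma> :: "'n set"
    assume "\<sigma> \<in> {\<sigma>. 2 \<le> card \<sigma>}"
    then show "\<sigma> \<in> {\<sigma>. flexible_clique J D \<sigma>}" using fl by simp
  qed
  show ?thesis
    using fl count_card2 unfolding flex_def eq by auto
qed

end
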